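(* Consider the perturbed federated algorithm described in the context, with $\beta\in(0,1)$, and a round $t$ whose step size satisfies $\gamma_t\le\min\{\frac1{2L},\frac1{\beta\mu}\}$. Assume that the bounded variance, bounded stochastic gradient norm, $L$-smoothness and $\mu$-strong convexity assumptions hold. Then $$\mathbb{E}\|\overline{\mathbf{w}}_{t+1,0}-\mathbf{w}_\star\|^2\le\kappa\,\mathbb{E}\|\overline{\mathbf{w}}_{t,0}-\mathbf{w}_\star\|^2+A,$$ where $$\kappa=1-\frac1\beta+\frac1\beta(1-\beta\mu\gamma_t)^E\le1-\mu\gamma_t$$ and $$A=8\gamma_t^2E^3G^2\Big[4+(1-\beta)^2+\frac{\mathbb{1}_{t\ge1}8\gamma_{t-1}^2(1-\beta)^2}{\gamma_t^2\beta^2}\Big]+\mu\gamma_t^3\beta(1-\beta)E^3G^2+\gamma_t^2ES\sigma^2+6\gamma_t^2LE\Gamma,$$ with $S=\sum_ip_i^2$.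
   Context: Setting: there are $C$ clients with local objectives $F_i:\mathbb{R}^D\to\mathbb{R}$. Similarity weights $p_{in}\ge0$ are symmetric, satisfy $p_{ii}=0$, and $\sum_{i,n}p_{in}=1$. Let $p_i=\sum_np_{in}>0$ and $F=\sum_ip_iF_i$. Algorithm, with parameter $\beta$, $E\ge1$ local steps and step sizes $\gamma_t$, all clients participating: - $\mathbf{u}^i_0=\overline{\mathbf{w}}_{0,0}$. - In round $t$, $\mathbf{w}^i_{t,0}=\overline{\mathbf{w}}_{t,0}$. For $k=0,\dots,E-1$, $\widetilde{\mathbf{w}}^i_{t,k}=\beta\mathbf{w}^i_{t,k}+(1-\beta)\mathbf{u}^i_t$ and $\mathbf{w}^i_{t,k+1}=\mathbf{w}^i_{t,k}-\gamma_tg_i(\widetilde{\mathbf{w}}^i_{t,k})$, with stochastic gradients $g_i$ of $F_i$ sampled independently across clients and steps given the past. - $\overline{\mathbf{w}}_{t,k}=\sum_ip_i\mathbf{w}^i_{t,k}$ and $\overline{\mathbf{w}}_{t+1,0}=\overline{\mathbf{w}}_{t,E}$. - For $t\ge1$, $\mathbf{u}^i_t=\frac1{p_i}\sum_np_{in}\mathbf{w}^n_{t-1,E}$. Assumptions: - Unbiasedness: $\mathbb{E}\,g_i(\widetilde{\mathbf{w}}^i_{t,k})=\nabla F_i(\widetilde{\mathbf{w}}^i_{t,k})$. - Variance: $\mathbb{E}\|g_i-\nabla F_i\|^2\le\sigma^2$ at these points. - Bounded second moment: $\mathbb{E}\|g_i(\widetilde{\mathbf{w}}^i_{t,k})\|^2\le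 G^2$. - Each $F_i$ is $L$-smooth and $\mu$-strongly convex. Notation: $\mathbf{w}_\star=\arg\min F$ and $f_\star=F(\mathbf{w}_\star)$. Also $\mathbf{w}^i_\star=\arg\min F_i$ and $\Gamma=f_\star-\sum_ip_iF_i(\mathbf{w}^i_\star)$. $\mathbb{E}$ is total expectation. *)

theory Defs
  imports "HOL-Probability.Probability"
begin

definition L_smooth :: "real \<Rightarrow> ('w::euclidean_space \<Rightarrow> real) \<Rightarrow> ('w \<Rightarrow> 'w) \<Rightarrow> bool" where
  "L_smooth L f df \<longleftrightarrow>
     (\<forall>x. (f has_derivative (\<lambda>h. df x \<bullet> h)) (at x)) \<and>
     (\<forall>x y. norm (df x - df y) \<le> L * norm (x - y))"

definition strongly_convex :: "real \<Rightarrow> ('w::euclidean_space \<Rightarrow> real) \<Rightarrow> bool" where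
  "strongly_convex \<mu> f \<longleftrightarrow> convex_on UNIV (\<lambda>x. f x - \<mu> / 2 * (norm x)\<^sup>2)"

definition pw :: "('c::finite \<Rightarrow> 'c \<Rightarrow> real) \<Rightarrow> 'c \<Rightarrow> real" where
  "pw p i = (\<Sum>n\<in>UNIV. p i n)"

text \<open>Local iterate w^i_{t,k}(omega) in round t, starting at the broadcast average wb,
  with personalised anchors u; sg t k i w omega is the stochastic gradient of client i
  sampled at step (t,k) evaluated at point w.\<close>
fun loc :: "real \<Rightarrow> (nat \<Rightarrow> real) \<Rightarrow> (nat \<Rightarrow> nat \<Rightarrow> 'c \<Rightarrow> 'w::real_vector \<Rightarrow> 'a \<Rightarrow> 'w)
            \<Rightarrow> 'w \<Rightarrow> ('c \<Rightarrow> 'w) \<Rightarrow> nat \<Rightarrow> nat \<Rightarrow> 'c \<Rightarrow> 'a \<Rightarrow> 'w" where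
  "loc \<beta> \<gamma> sg wb u t 0 i \<omega> = wb"
| "loc \<beta> \<gamma> sg wb u t (Suc k) i \<omega> =
     loc \<beta> \<gamma> sg wb u t k i \<omega>
     - \<gamma> t *\<^sub>R sg t k i (\<beta> *\<^sub>R loc \<beta> \<gamma> sg wb u t k i \<omega> + (1 - \<beta>) *\<^sub>R u i) \<omega>"

definition pert :: "real \<Rightarrow> (nat \<Rightarrow> real) \<Rightarrow> (nat \<Rightarrow> nat \<Rightarrow> 'c \<Rightarrow> 'w::real_vector \<Rightarrow> 'a \<Rightarrow> 'w)
            \<Rightarrow> 'w \<Rightarrow> ('c \<Rightarrow> 'w) \<Rightarrow> nat \<Rightarrow> nat \<Rightarrow> 'c \<Rightarrow> 'a \<Rightarrow> 'w" where
  "pert \<beta> \<gamma> sg wb u t k i \<omega> = \<beta> *\<^sub>R loc \<beta> \<gamma> sg wb u t k i \<omega> + (1 - \<beta>) *\<^sub>R u i"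

text \<open>State at the start of round t: (wbar_{t,0}, (u^i_t)_i).\<close>
fun st :: "('c::finite \<Rightarrow> 'c \<Rightarrow> real) \<Rightarrow> real \<Rightarrow> nat \<Rightarrow> (nat \<Rightarrow> real)
           \<Rightarrow> (nat \<Rightarrow> nat \<Rightarrow> 'c \<Rightarrow> 'w::real_vector \<Rightarrow> 'a \<Rightarrow> 'w) \<Rightarrow> 'w \<Rightarrow> nat \<Rightarrow> 'a \<Rightarrow> 'w \<times> ('c \<Rightarrow> 'w)" where
  "st p \<beta> E \<gamma> sg w0 0 \<omega> = (w0, \<lambda>i. w0)"
| "st p \<beta> E \<gamma> sg w0 (Suc t) \<omega> =
     (let wb = fst (st p \<beta> E \<gamma> sg w0 t \<omega>);
          u  = snd (st p \<beta> E \<gamma> sg w0 t \<omega>);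
          wE = (\<lambda>n. loc \<beta> \<gamma> sg wb u t E n \<omega>)
      in ((\<Sum>i\<in>UNIV. pw p i *\<^sub>R wE i),
          (\<lambda>i. (1 / pw p i) *\<^sub>R (\<Sum>n\<in>UNIV. p i n *\<^sub>R wE n))))"

definition wbar where "wbar p \<beta> E \<gamma> sg w0 t \<omega> = fst (st p \<beta> E \<gamma> sg w0 t \<omega>)"
definition uanc where "uanc p \<beta> E \<gamma> sg w0 t \<omega> = snd (st p \<beta> E \<gamma> sg w0 t \<omega>)"

end

theory Submission
  imports Defs
begin

lemma indep_integral:
  fixes h :: "'z \<times> 'z \<Rightarrow> real" and N1 :: "'z measure" and N2 :: "'z measure"
  assumes M: "prob_space M" and ind: "prob_space.indep_var M N1 Z N2 Y"
    and hm: "h \<in> borel_measurable (N1 \<Otimes>\<^sub>M N2)"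
    and hi: "integrable M (\<lambda>\<omega>. h (Z \<omega>, Y \<omega>))"
  shows "integrable (distr M N1 Z) (\<lambda>z. \<integral>x. h (z, x) \<partial>distr M N2 Y)"
    and "(\<integral>\<omega>. h (Z \<omega>, Y \<omega>) \<partial>M) = (\<integral>z. (\<integral>x. h (z, x) \<partial>distr M N2 Y) \<partial>distr M N1 Z)"
proof -
  interpret prob_space M by (rule M)
  have rv: "Z \<in> measurable M N1" "Y \<in> measurable M N2"
    and eq: "distr M N1 Z \<Otimes>\<^sub>M distr M N2 Y = distr M (N1 \<Otimes>\<^sub>M N2) (\<lambda>x. (Z x, Y x))"
    using ind unfolding indep_var_distribution_eq by auto
  interpret P1: prob_space "distr M N1 Z" by (rule prob_space_distr) (rule rv)
  interpret P2: prob_space "distr M N2 Y" by (rule prob_space_distr) (rule rv)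
  interpret PP: pair_sigma_finite "distr M N1 Z" "distr M N2 Y" 
    by unfold_locales
  have pm: "(\<lambda>x. (Z x, Y x)) \<in> measurable M (N1 \<Otimes>\<^sub>M N2)" using rv by (rule measurable_Pair)
  have int2: "integrable (distr M N1 Z \<Otimes>\<^sub>M distr M N2 Y) h"
    unfolding eq using integrable_distr_eq[OF pm hm] hi by simp
  show "integrable (distr M N1 Z) (\<lambda>z. \<integral>x. h (z, x) \<partial>distr M N2 Y)"
    using PP.integrable_fst'[OF int2] .
  have "(\<integral>z. (\<integral>x. h (z, x) \<partial>distr M N2 Y) \<partial>distr M N1 Z) = integral\<^sup>L (distr M N1 Z \<Otimes>\<^sub>M distr M N2 Y) h"
    using PP.integral_fst'[OF int2] .
  also have "\<dots> = (\<integral>\<omega>. h (Z \<omega>, Y \<omega>) \<partial>M)"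
    unfolding eq by (rule integral_distr[OF pm hm])
  finally show "(\<integral>\<omega>. h (Z \<omega>, Y \<omega>) \<partial>M) = (\<integral>z. (\<integral>x. h (z, x) \<partial>distr M N2 Y) \<partial>distr M N1 Z)" by simp
qed

definition sgG :: "('c \<Rightarrow> 'w \<Rightarrow> 'x \<Rightarrow> 'w) \<Rightarrow> ('b \<Rightarrow> nat \<times> nat \<times> 'c \<Rightarrow> 'x) \<Rightarrow> nat \<Rightarrow> nat \<Rightarrow> 'c \<Rightarrow> 'w \<Rightarrow> 'b \<Rightarrow> 'w"
  where "sgG g Q s k i w b = g i w (Q b (s, k, i))"

lemma sgG_app: "sgG g Q s k i w b = g i w (Q b (s, k, i))"
  by (simp add: sgG_def)

lemma loc_Suc_G: "loc \<beta> \<gamma> (sgG g Q) wb u s (Suc k) i a = loc \<beta> \<gamma> (sgG g Q) wb u s k i a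
     - \<gamma> s *\<^sub>R g i (\<beta> *\<^sub>R loc \<beta> \<gamma> (sgG g Q) wb u s k i a + (1 - \<beta>) *\<^sub>R u i) (Q a (s, k, i))"
  by (subst loc.simps, subst sgG_app, rule refl)

lemma loc_agree:
  assumes "\<And>j. j < k \<Longrightarrow> Q a (s, j, i) = Q' b (s, j, i)"
  shows "loc \<beta> \<gamma> (sgG g Q) wb u s k i a = loc \<beta> \<gamma> (sgG g Q') wb u s k i b"
  using assms by (induction k) (auto simp: sgG_app)

lemma st_agree:
  assumes "\<And>s' j n. s' < s \<Longrightarrow> j < E \<Longrightarrow> Q a (s', j, n) = Q' b (s', j, n)"
  shows "st p \<beta> E \<gamma> (sgG g Q) w0 s a = st p \<beta> E \<gamma> (sgG g Q') w0 s b"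
  using assms
proof (induction s)
  case 0 then show ?case by simp
next
  case (Suc s)
  have IH: "st p \<beta> E \<gamma> (sgG g Q) w0 s a = st p \<beta> E \<gamma> (sgG g Q') w0 s b"
    using Suc.prems by (intro Suc.IH) auto
  have L: "\<And>n. loc \<beta> \<gamma> (sgG g Q) wb u s E n a = loc \<beta> \<gamma> (sgG g Q') wb u s E n b" for wb u
    using Suc.prems by (intro loc_agree) auto
  show ?case by (simp add: IH L Let_def)
qed

lemma g_comp_meas:
  fixes g :: "'c \<Rightarrow> 'w::euclidean_space \<Rightarrow> 'x \<Rightarrow> 'w"
  assumes gm: "(\<lambda>(w, x). g i w x) \<in> borel_measurable (borel \<Otimes>\<^sub>M N)"
    and Y: "Y \<in> borel_measurable P" and X: "X \<in> measurable P N"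
  shows "(\<lambda>a. g i (Y a) (X a)) \<in> borel_measurable P"
proof -
  have "(\<lambda>a. (Y a, X a)) \<in> measurable P (borel \<Otimes>\<^sub>M N)" using Y X by (rule measurable_Pair)
  from measurable_compose[OF this gm] show ?thesis by simp
qed

lemma loc_meas:
  fixes g :: "'c \<Rightarrow> 'w::euclidean_space \<Rightarrow> 'x \<Rightarrow> 'w"
  assumes gm: "\<And>i. (\<lambda>(w, x). g i w x) \<in> borel_measurable (borel \<Otimes>\<^sub>M N)"
    and W: "Wb \<in> borel_measurable P" and U: "\<And>n. (\<lambda>a. Ub a n) \<in> borel_measurable P"
    and Qm: "\<And>j. j < k \<Longrightarrow> (\<lambda>a. Q a (s, j, i)) \<in> measurable P N"
  shows "(\<lambda>a. loc \<beta> \<gamma> (sgG g Q) (Wb a) (Ub a) s k i a) \<in> borel_measurable P"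
  using Qm
proof (induction k)
  case 0 then show ?case using W by simp
next
  case (Suc k)
  have IH: "(\<lambda>a. loc \<beta> \<gamma> (sgG g Q) (Wb a) (Ub a) s k i a) \<in> borel_measurable P"
    using Suc.prems by (intro Suc.IH) auto
  have "(\<lambda>a. g i (\<beta> *\<^sub>R loc \<beta> \<gamma> (sgG g Q) (Wb a) (Ub a) s k i a + (1 - \<beta>) *\<^sub>R Ub a i) (Q a (s, k, i))) \<in> borel_measurable P"
    by (intro g_comp_meas[OF gm] borel_measurable_add borel_measurable_scaleR IH U borel_measurable_const Suc.prems) auto
  then show ?case using IH by (subst loc_Suc_G) (intro borel_measurable_diff borel_measurable_scaleR borel_measurable_const)
qed

lemma st_meas:
  fixes p :: "'c::finite \<Rightarrow> 'c \<Rightarrow> real" and g :: "'c \<Rightarrow> 'w::euclidean_space \<Rightarrow> 'x \<Rightarrow> 'w"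
  assumes gm: "\<And>i. (\<lambda>(w, x). g i w x) \<in> borel_measurable (borel \<Otimes>\<^sub>M N)"
    and Qm: "\<And>s' j n. s' < s \<Longrightarrow> j < E \<Longrightarrow> (\<lambda>a. Q a (s', j, n)) \<in> measurable P N"
  shows "(\<lambda>a. fst (st p \<beta> E \<gamma> (sgG g Q) w0 s a)) \<in> borel_measurable P \<and>
         (\<forall>n. (\<lambda>a. snd (st p \<beta> E \<gamma> (sgG g Q) w0 s a) n) \<in> borel_measurable P)"
  using Qm
proof (induction s)
  case 0 then show ?case by simp
next
  case (Suc s)
  have IH: "(\<lambda>a. fst (st p \<beta> E \<gamma> (sgG g Q) w0 s a)) \<in> borel_measurable P"
     "\<And>n. (\<lambda>a. snd (st p \<beta> E \<gamma> (sgG g Q) w0 s a) n) \<in> borel_measurable P"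
    using Suc.prems Suc.IH by auto
  have L: "\<And>n. (\<lambda>a. loc \<beta> \<gamma> (sgG g Q) (fst (st p \<beta> E \<gamma> (sgG g Q) w0 s a)) (snd (st p \<beta> E \<gamma> (sgG g Q) w0 s a)) s E n a) \<in> borel_measurable P"
    by (intro loc_meas[OF gm] IH Suc.prems) auto
  show ?case
    by (simp add: Let_def, intro conjI allI borel_measurable_sum borel_measurable_scaleR borel_measurable_const L)
qed

lemma norm_add_sq:
  fixes u v :: "'w::real_inner"
  shows "(norm (u + v))\<^sup>2 = (norm u)\<^sup>2 + 2 * (u \<bullet> v) + (norm v)\<^sup>2"
  by (simp add: power2_norm_eq_inner inner_add_left inner_add_right inner_commute)

lemma norm_diff_sq:
  fixes u v :: "'w::real_inner"
  shows "(norm (u - v))\<^sup>2 = (norm u)\<^sup>2 - 2 * (u \<bullet> v) + (norm v)\<^sup>2"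
  by (simp add: power2_norm_eq_inner inner_diff_left inner_diff_right inner_commute)

lemma wvar_identity:
  fixes z :: "'i \<Rightarrow> 'w::real_inner"
  assumes "sum a A = 1"
  shows "(\<Sum>i\<in>A. a i * (norm (z i - c))\<^sup>2) =
         (\<Sum>i\<in>A. a i * (norm (z i - (\<Sum>j\<in>A. a j *\<^sub>R z j)))\<^sup>2) + (norm ((\<Sum>j\<in>A. a j *\<^sub>R z j) - c))\<^sup>2"
proof -
  define m where "m = (\<Sum>j\<in>A. a j *\<^sub>R z j)"
  have e: "(norm (z i - c))\<^sup>2 = (norm (z i - m))\<^sup>2 + 2 * ((z i - m) \<bullet> (m - c)) + (norm (m - c))\<^sup>2" for i
  proof -
    have "z i - c = (z i - m) + (m - c)" by simp
    then have "(norm (z i - c))\<^sup>2 = (norm ((z i - m) + (m - c)))\<^sup>2" by metis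
    then show ?thesis by (simp only: norm_add_sq)
  qed
  have z: "(\<Sum>i\<in>A. a i * ((z i - m) \<bullet> (m - c))) = 0"
  proof -
    have "(\<Sum>i\<in>A. a i * ((z i - m) \<bullet> (m - c))) = (\<Sum>i\<in>A. (a i *\<^sub>R (z i - m))) \<bullet> (m - c)"
      by (simp add: inner_sum_left)
    also have "(\<Sum>i\<in>A. (a i *\<^sub>R (z i - m))) = m - sum a A *\<^sub>R m"
      by (simp add: m_def scaleR_diff_right sum_subtractf scaleR_sum_left)
    finally show ?thesis using assms by simp
  qed
  have "(\<Sum>i\<in>A. a i * (norm (z i - c))\<^sup>2) = (\<Sum>i\<in>A. a i * (norm (z i - m))\<^sup>2 + 2 * (a i * ((z i - m) \<bullet> (m - c))) + a i * (norm (m - c))\<^sup>2)"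
    by (rule sum.cong) (simp_all only: e algebra_simps)
  also have "\<dots> = (\<Sum>i\<in>A. a i * (norm (z i - m))\<^sup>2) + 2 * (\<Sum>i\<in>A. a i * ((z i - m) \<bullet> (m - c))) + sum a A * (norm (m - c))\<^sup>2"
    by (simp only: sum.distrib sum_distrib_left sum_distrib_right)
  finally have "(\<Sum>i\<in>A. a i * (norm (z i - c))\<^sup>2) = (\<Sum>i\<in>A. a i * (norm (z i - m))\<^sup>2) + 2 * (\<Sum>i\<in>A. a i * ((z i - m) \<bullet> (m - c))) + sum a A * (norm (m - c))\<^sup>2" .
  then show ?thesis using z assms by (simp add: m_def)
qed

lemma wjensen:
  fixes z :: "'i \<Rightarrow> 'w::real_inner"
  assumes "sum a A = 1" "\<And>i. i \<in> A \<Longrightarrow> a i \<ge> 0"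
  shows "(norm ((\<Sum>j\<in>A. a j *\<^sub>R z j) - c))\<^sup>2 \<le> (\<Sum>i\<in>A. a i * (norm (z i - c))\<^sup>2)"
  using wvar_identity[OF assms(1), of z c] assms(2)
  by (simp add: sum_nonneg)

lemma wvar_le:
  fixes z :: "'i \<Rightarrow> 'w::real_inner"
  assumes "sum a A = 1" "\<And>i. i \<in> A \<Longrightarrow> a i \<ge> 0"
  shows "(\<Sum>i\<in>A. a i * (norm (z i - (\<Sum>j\<in>A. a j *\<^sub>R z j)))\<^sup>2) \<le> (\<Sum>i\<in>A. a i * (norm (z i - c))\<^sup>2)"
  using wvar_identity[OF assms(1), of z c] by simp

lemma sum_card_sq:
  fixes z :: "nat \<Rightarrow> 'w::real_inner"
  shows "(norm (\<Sum>j<k. z j))\<^sup>2 \<le> real k * (\<Sum>j<k. (norm (z j))\<^sup>2)"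
proof (cases "k = 0")
  case True then show ?thesis by simp
next
  case False
  have "sum (\<lambda>_. 1 / real k) {..<k} = 1" using False by simp
  from wjensen[OF this, of z 0] have
    "(norm (\<Sum>j<k. (1 / real k) *\<^sub>R z j))\<^sup>2 \<le> (\<Sum>j<k. (1 / real k) * (norm (z j))\<^sup>2)" by simp
  also have "(\<Sum>j<k. (1 / real k) *\<^sub>R z j) = (1 / real k) *\<^sub>R (\<Sum>j<k. z j)"
    by (simp add: scaleR_sum_right)
  finally have "(norm (\<Sum>j<k. z j))\<^sup>2 / (real k)\<^sup>2 \<le> (\<Sum>j<k. (norm (z j))\<^sup>2) / real k"
    by (simp add: power_divide sum_divide_distrib)
  then show ?thesis using False by (simp add: field_simps power2_eq_square)
qed

lemma affine_sq_identity:
  fixes x y :: "'w::real_inner"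
  assumes "a + b = 1"
  shows "(norm (a *\<^sub>R x + b *\<^sub>R y))\<^sup>2 = a * (norm x)\<^sup>2 + b * (norm y)\<^sup>2 - a * b * (norm (x - y))\<^sup>2"
proof -
  have b: "b = 1 - a" using assms by simp
  have N: "(norm (a *\<^sub>R x + b *\<^sub>R y))\<^sup>2 = a\<^sup>2 * (norm x)\<^sup>2 + 2 * a * b * (x \<bullet> y) + b\<^sup>2 * (norm y)\<^sup>2"
    by (simp only: norm_add_sq) (simp add: power_mult_distrib)
  have D: "(norm (x - y))\<^sup>2 = (norm x)\<^sup>2 - 2 * (x \<bullet> y) + (norm y)\<^sup>2" by (rule norm_diff_sq)
  show ?thesis unfolding N D unfolding b by (simp add: algebra_simps power2_eq_square)
qed

lemma tangent_sc:
  fixes f :: "'w::euclidean_space \<Rightarrow> real"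
  assumes sc: "strongly_convex \<mu> f" and d: "\<And>x. (f has_derivative (\<lambda>h. df x \<bullet> h)) (at x)"
  shows "f y \<ge> f x + df x \<bullet> (y - x) + \<mu> / 2 * (norm (y - x))\<^sup>2"
proof -
  define h where "h v = f v - \<mu> / 2 * (norm v)\<^sup>2" for v
  have hc: "convex_on UNIV h" using sc unfolding strongly_convex_def h_def by simp
  define \<phi> where "\<phi> s = h (x + s *\<^sub>R (y - x))" for s :: real
  have pc: "convex_on UNIV \<phi>"
  proof (rule convex_onI)
    fix u s1 s2 :: real assume u: "0 < u" "u < 1"
    have "x + ((1 - u) * s1 + u * s2) *\<^sub>R (y - x) = (1 - u) *\<^sub>R (x + s1 *\<^sub>R (y - x)) + u *\<^sub>R (x + s2 *\<^sub>R (y - x))"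
      by (simp add: algebra_simps)
    then have "\<phi> ((1 - u) * s1 + u * s2) = h ((1 - u) *\<^sub>R (x + s1 *\<^sub>R (y - x)) + u *\<^sub>R (x + s2 *\<^sub>R (y - x)))"
      by (simp add: \<phi>_def)
    also have "\<dots> \<le> (1 - u) * h (x + s1 *\<^sub>R (y - x)) + u * h (x + s2 *\<^sub>R (y - x))"
      using convex_onD[OF hc] u by auto
    finally show "\<phi> ((1 - u) *\<^sub>R s1 + u *\<^sub>R s2) \<le> (1 - u) * \<phi> s1 + u * \<phi> s2" by (simp add: \<phi>_def)
  qed simp
  have hd: "(h has_derivative (\<lambda>v. df z \<bullet> v - \<mu> / 2 * (z \<bullet> v + v \<bullet> z))) (at z)" for z
  proof -
    have "((\<lambda>v. f v - \<mu> / 2 * (v \<bullet> v)) has_derivative (\<lambda>v. df z \<bullet> v - \<mu> / 2 * (z \<bullet> v + v \<bullet> z))) (at z)"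
      by (intro has_derivative_diff d has_derivative_mult_right has_derivative_inner has_derivative_ident)
    then show ?thesis unfolding h_def power2_norm_eq_inner .
  qed
  have "(\<phi> has_derivative (\<lambda>s. df x \<bullet> (s *\<^sub>R (y - x)) - \<mu> / 2 * (x \<bullet> (s *\<^sub>R (y - x)) + (s *\<^sub>R (y - x)) \<bullet> x))) (at 0)"
  proof -
    have "((\<lambda>s. x + s *\<^sub>R (y - x)) has_derivative (\<lambda>s. s *\<^sub>R (y - x))) (at 0)"
      by (intro derivative_eq_intros) auto
    note c = has_derivative_compose[OF this hd[of "x + 0 *\<^sub>R (y - x)"]]
    have pe: "\<phi> = (\<lambda>s. h (x + s *\<^sub>R (y - x)))" by (simp add: \<phi>_def fun_eq_iff)
    show ?thesis using c unfolding pe by (simp add: o_def)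
  qed
  then have "(\<phi> has_derivative (*) (df x \<bullet> (y - x) - \<mu> * (x \<bullet> (y - x)))) (at 0)"
    by (rule has_derivative_eq_rhs) (auto simp: fun_eq_iff algebra_simps inner_commute)
  then have "(\<phi> has_field_derivative (df x \<bullet> (y - x) - \<mu> * (x \<bullet> (y - x)))) (at 0)"
    unfolding has_field_derivative_def .
  from convex_on_imp_above_tangent[OF pc _ _ _ this[THEN has_field_derivative_at_within], of 1]
  have "\<phi> 1 - \<phi> 0 \<ge> df x \<bullet> (y - x) - \<mu> * (x \<bullet> (y - x))" by simp
  then have "f y - \<mu> / 2 * (norm y)\<^sup>2 - (f x - \<mu> / 2 * (norm x)\<^sup>2) \<ge> df x \<bullet> (y - x) - \<mu> * (x \<bullet> (y - x))"
    by (simp add: \<phi>_def h_def)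
  moreover have "(norm (y - x))\<^sup>2 = (norm y)\<^sup>2 - (norm x)\<^sup>2 - 2 * (x \<bullet> (y - x))"
    by (simp add: power2_norm_eq_inner inner_diff_left inner_diff_right inner_commute)
  then have "\<mu> / 2 * (norm (y - x))\<^sup>2 = \<mu> / 2 * (norm y)\<^sup>2 - \<mu> / 2 * (norm x)\<^sup>2 - \<mu> * (x \<bullet> (y - x))"
    by (simp only:) (simp add: algebra_simps)
  ultimately show ?thesis by linarith
qed

lemma L_smooth_nonneg:
  assumes sm: "L_smooth L f (df :: 'w::euclidean_space \<Rightarrow> 'w)"
  shows "L \<ge> 0"
proof -
  obtain e :: 'w where e: "e \<in> Basis" using nonempty_Basis by blast
  then have "e \<noteq> 0" by auto
  then have "norm (e - 0) > 0" by simp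
  moreover have "0 \<le> L * norm (e - 0)" using sm unfolding L_smooth_def
    by (meson norm_ge_zero order.trans)
  ultimately show ?thesis by (simp add: zero_le_mult_iff)
qed

lemma smooth_upper:
  fixes f :: "'w::euclidean_space \<Rightarrow> real"
  assumes sm: "L_smooth L f df"
  shows "f y \<le> f x + df x \<bullet> (y - x) + L * (norm (y - x))\<^sup>2"
proof -
  have d: "\<And>z. (f has_derivative (\<lambda>h. df z \<bullet> h)) (at z)"
    and lip: "\<And>a b. norm (df a - df b) \<le> L * norm (a - b)" using sm unfolding L_smooth_def by auto
  define S where "S = closed_segment x y"
  have B: "onorm ((\<lambda>h. df z \<bullet> h) - (\<lambda>h. df x \<bullet> h)) \<le> L * norm (y - x)" if "z \<in> S" for z
  proof -
    have "norm (z - x) \<le> norm (y - x)" using that unfolding S_def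
      by (metis dist_commute dist_norm dist_in_closed_segment)
    have "onorm ((\<lambda>h. df z \<bullet> h) - (\<lambda>h. df x \<bullet> h)) \<le> norm (df z - df x)"
    proof (rule onorm_le)
      fix h show "norm (((\<lambda>h. df z \<bullet> h) - (\<lambda>h. df x \<bullet> h)) h) \<le> norm (df z - df x) * norm h"
        by (simp add: inner_diff_left[symmetric] Cauchy_Schwarz_ineq2)
    qed
    also have "\<dots> \<le> L * norm (z - x)" by (rule lip)
    also have "\<dots> \<le> L * norm (y - x)"
    proof -
      have "L \<ge> 0" using L_smooth_nonneg[OF sm] .
      then show ?thesis using \<open>norm (z - x) \<le> norm (y - x)\<close> by (auto intro: mult_left_mono)
    qed
    finally show ?thesis .
  qed
  have "norm (f y - f x - df x \<bullet> (y - x)) \<le> norm (y - x) * (L * norm (y - x))"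
  proof (rule differentiable_bound_linearization[where S = S and f' = "\<lambda>z h. df z \<bullet> h"])
    show "\<And>t. t \<in> {0..1} \<Longrightarrow> x + t *\<^sub>R (y - x) \<in> S" unfolding S_def closed_segment_def
      by (auto intro!: exI[where x = "_ :: real"] simp: algebra_simps)
    show "\<And>z. z \<in> S \<Longrightarrow> (f has_derivative (\<lambda>h. df z \<bullet> h)) (at z within S)"
      using d by (rule has_derivative_at_withinI)
    show "\<And>z. z \<in> S \<Longrightarrow> onorm ((\<lambda>h. df z \<bullet> h) - (\<lambda>h. df x \<bullet> h)) \<le> L * norm (y - x)" by (rule B)
    show "x \<in> S" unfolding S_def by simp
  qed
  then show ?thesis by (simp add: power2_eq_square algebra_simps)
qed

definition sqi :: "'a measure \<Rightarrow> ('a \<Rightarrow> 'w::euclidean_space) \<Rightarrow> bool" where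
  "sqi M f \<longleftrightarrow> f \<in> borel_measurable M \<and> integrable M (\<lambda>x. (norm (f x))\<^sup>2)"

lemma sqiD: "sqi M f \<Longrightarrow> f \<in> borel_measurable M" "sqi M f \<Longrightarrow> integrable M (\<lambda>x. (norm (f x))\<^sup>2)"
  by (auto simp: sqi_def)

lemma sqi_const: "prob_space M \<Longrightarrow> sqi M (\<lambda>_. c)"
  unfolding sqi_def by (auto intro: finite_measure.integrable_const prob_space.finite_measure)

lemma sq_add_le: "(norm (a + b :: 'w::real_normed_vector))\<^sup>2 \<le> 2 * (norm a)\<^sup>2 + 2 * (norm b)\<^sup>2"
proof -
  have "norm (a + b) \<le> norm a + norm b" by (rule norm_triangle_ineq)
  then have "(norm (a + b))\<^sup>2 \<le> (norm a + norm b)\<^sup>2" by (simp add: power_mono)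
  also have "\<dots> \<le> 2 * (norm a)\<^sup>2 + 2 * (norm b)\<^sup>2"
  proof -
    have "0 \<le> (norm a - norm b)\<^sup>2" by simp
    then show ?thesis unfolding power2_diff power2_sum by linarith
  qed
  finally show ?thesis .
qed

lemma sqi_add: assumes "sqi M f" "sqi M g" shows "sqi M (\<lambda>x. f x + g x)"
proof -
  have m: "(\<lambda>x. f x + g x) \<in> borel_measurable M" using assms by (auto simp: sqi_def)
  have "integrable M (\<lambda>x. 2 * (norm (f x))\<^sup>2 + 2 * (norm (g x))\<^sup>2)" using assms by (auto simp: sqi_def)
  moreover have "(\<lambda>x. (norm (f x + g x))\<^sup>2) \<in> borel_measurable M" using m by measurable
  ultimately have "integrable M (\<lambda>x. (norm (f x + g x))\<^sup>2)"
    by (rule Bochner_Integration.integrable_bound) (auto intro!: AE_I2 order.trans[OF sq_add_le])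
  then show ?thesis using m by (simp add: sqi_def)
qed

lemma sqi_scaleR: assumes "sqi M f" shows "sqi M (\<lambda>x. c *\<^sub>R f x)"
proof -
  have "integrable M (\<lambda>x. c\<^sup>2 * (norm (f x))\<^sup>2)" using assms unfolding sqi_def by simp
  moreover have e: "(\<lambda>x. (norm (c *\<^sub>R f x))\<^sup>2) = (\<lambda>x. c\<^sup>2 * (norm (f x))\<^sup>2)" by (simp add: fun_eq_iff power_mult_distrib)
  moreover have "(\<lambda>x. c *\<^sub>R f x) \<in> borel_measurable M" using assms unfolding sqi_def by (simp add: borel_measurable_scaleR)
  ultimately show ?thesis unfolding sqi_def e by simp
qed

lemma sqi_uminus: assumes "sqi M f" shows "sqi M (\<lambda>x. - f x)"
  using sqi_scaleR[OF assms, of "-1"] by simp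

lemma sqi_diff: assumes "sqi M f" "sqi M g" shows "sqi M (\<lambda>x. f x - g x)"
  using sqi_add[OF assms(1) sqi_uminus[OF assms(2)]] by simp

lemma sqi_sum: assumes "prob_space M" "\<And>i. i \<in> A \<Longrightarrow> sqi M (f i)" shows "sqi M (\<lambda>x. \<Sum>i\<in>A. f i x)"
  using assms(2)
proof (induction A rule: infinite_finite_induct)
  case (infinite A) then show ?case using sqi_const[OF assms(1), of 0] by simp
next
  case empty then show ?case using sqi_const[OF assms(1), of 0] by simp
next
  case (insert a A) then show ?case by (simp add: sqi_add)
qed

lemma sqi_inner: assumes "sqi M f" "sqi M g" shows "integrable M (\<lambda>x. f x \<bullet> g x)"
proof -
  have i1: "integrable M (\<lambda>x. (norm (f x))\<^sup>2 + (norm (g x))\<^sup>2)" using assms by (auto simp: sqi_def)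
  have m1: "(\<lambda>x. f x \<bullet> g x) \<in> borel_measurable M" using assms unfolding sqi_def by (simp add: borel_measurable_inner)
  have b: "norm (f x \<bullet> g x) \<le> norm ((norm (f x))\<^sup>2 + (norm (g x))\<^sup>2)" for x
  proof -
    have "\<bar>f x \<bullet> g x\<bar> \<le> norm (f x) * norm (g x)" by (rule Cauchy_Schwarz_ineq2)
    also have "\<dots> \<le> (norm (f x))\<^sup>2 + (norm (g x))\<^sup>2"
    proof -
      have "0 \<le> (norm (f x) - norm (g x))\<^sup>2" by simp
      moreover have "0 \<le> norm (f x) * norm (g x)" by simp
      ultimately show ?thesis unfolding power2_diff by linarith
    qed
    finally show ?thesis by simp
  qed
  show ?thesis by (rule Bochner_Integration.integrable_bound[OF i1 m1]) (rule AE_I2, rule b)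
qed

lemma sqi_norm2: "sqi M f \<Longrightarrow> integrable M (\<lambda>x. (norm (f x))\<^sup>2)" by (simp add: sqi_def)

theorem lemma8:
  fixes M :: "'a measure" and N :: "'x measure"
    and p :: "'c::finite \<Rightarrow> 'c \<Rightarrow> real"
    and F :: "'c \<Rightarrow> 'w::euclidean_space \<Rightarrow> real" and dF :: "'c \<Rightarrow> 'w \<Rightarrow> 'w"
    and g :: "'c \<Rightarrow> 'w \<Rightarrow> 'x \<Rightarrow> 'w"
    and \<xi> :: "nat \<Rightarrow> nat \<Rightarrow> 'c \<Rightarrow> 'a \<Rightarrow> 'x"
    and \<beta> L \<mu> \<sigma> G :: real and E t :: nat and \<gamma> :: "nat \<Rightarrow> real"
    and w0 ws :: 'w and wi :: "'c \<Rightarrow> 'w"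
  defines "sg \<equiv> (\<lambda>s k i w \<omega>. g i w (\<xi> s k i \<omega>))"
  defines "Fb \<equiv> (\<lambda>w. \<Sum>i\<in>UNIV. pw p i * F i w)"
  assumes M: "prob_space M"
    and p_nonneg: "\<And>i n. p i n \<ge> 0" and p_sym: "\<And>i n. p i n = p n i"
    and p_diag: "\<And>i. p i i = 0" and p_sum: "(\<Sum>i\<in>UNIV. \<Sum>n\<in>UNIV. p i n) = 1"
    and p_pos: "\<And>i. pw p i > 0"
    and smooth: "\<And>i. L_smooth L (F i) (dF i)"
    and sconv: "\<And>i. strongly_convex \<mu> (F i)"
    and \<mu>_pos: "\<mu> > 0"
    and ws_min: "\<And>w. Fb ws \<le> Fb w"
    and wi_min: "\<And>i w. F i (wi i) \<le> F i w"
    and \<beta>: "0 < \<beta>" "\<beta> < 1"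
    and E: "E \<ge> 1"
    and \<gamma>_pos: "\<And>s. \<gamma> s > 0"
    and \<gamma>_t: "\<gamma> t \<le> min (1 / (2 * L)) (1 / (\<beta> * \<mu>))"
    and g_meas: "\<And>i. (\<lambda>(w, x). g i w x) \<in> borel_measurable (borel \<Otimes>\<^sub>M N)"
    and indep: "prob_space.indep_vars M (\<lambda>_. N) (\<lambda>(s, k, i). \<xi> s k i) UNIV"
    and unbiased: "\<And>s k i w. integrable (distr M N (\<xi> s k i)) (g i w) \<and>
                      (\<integral>x. g i w x \<partial>distr M N (\<xi> s k i)) = dF i w"
    and variance: "\<And>s k i.
        integrable M (\<lambda>\<omega>. (norm (g i (pert \<beta> \<gamma> sg (wbar p \<beta> E \<gamma> sg w0 s \<omega>) (uanc p \<beta> E \<gamma> sg w0 s \<omega>) s k i \<omega>) (\<xi> s k i \<omega>)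
                              - dF i (pert \<beta> \<gamma> sg (wbar p \<beta> E \<gamma> sg w0 s \<omega>) (uanc p \<beta> E \<gamma> sg w0 s \<omega>) s k i \<omega>)))\<^sup>2) \<and>
        (\<integral>\<omega>. (norm (g i (pert \<beta> \<gamma> sg (wbar p \<beta> E \<gamma> sg w0 s \<omega>) (uanc p \<beta> E \<gamma> sg w0 s \<omega>) s k i \<omega>) (\<xi> s k i \<omega>)
                              - dF i (pert \<beta> \<gamma> sg (wbar p \<beta> E \<gamma> sg w0 s \<omega>) (uanc p \<beta> E \<gamma> sg w0 s \<omega>) s k i \<omega>)))\<^sup>2 \<partial>M) \<le> \<sigma>\<^sup>2"
    and second_moment: "\<And>s k i.
        integrable M (\<lambda>\<omega>. (norm (g i (pert \<beta> \<gamma> sg (wbar p \<beta> E \<gamma> sg w0 s \<omega>) (uanc p \<beta> E \<gamma> sg w0 s \<omega>) s k i \<omega>) (\<xi> s k i \<omega>)))\<^sup>2) \<and>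
        (\<integral>\<omega>. (norm (g i (pert \<beta> \<gamma> sg (wbar p \<beta> E \<gamma> sg w0 s \<omega>) (uanc p \<beta> E \<gamma> sg w0 s \<omega>) s k i \<omega>) (\<xi> s k i \<omega>)))\<^sup>2 \<partial>M) \<le> G\<^sup>2"
  shows "(let \<kappa> = 1 - 1 / \<beta> + 1 / \<beta> * (1 - \<beta> * \<mu> * \<gamma> t) ^ E;
             S = (\<Sum>i\<in>UNIV. (pw p i)\<^sup>2);
             \<Gamma> = Fb ws - (\<Sum>i\<in>UNIV. pw p i * F i (wi i));
             A = 8 * (\<gamma> t)\<^sup>2 * real E ^ 3 * G\<^sup>2 *
                   (4 + (1 - \<beta>)\<^sup>2 + (if t \<ge> 1 then 8 * (\<gamma> (t - 1))\<^sup>2 * (1 - \<beta>)\<^sup>2 / ((\<gamma> t)\<^sup>2 * \<beta>\<^sup>2) else 0))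
                 + \<mu> * (\<gamma> t) ^ 3 * \<beta> * (1 - \<beta>) * real E ^ 3 * G\<^sup>2
                 + (\<gamma> t)\<^sup>2 * real E * S * \<sigma>\<^sup>2
                 + 6 * (\<gamma> t)\<^sup>2 * L * real E * \<Gamma>
         in (\<integral>\<omega>. (norm (wbar p \<beta> E \<gamma> sg w0 (Suc t) \<omega> - ws))\<^sup>2 \<partial>M)
              \<le> \<kappa> * (\<integral>\<omega>. (norm (wbar p \<beta> E \<gamma> sg w0 t \<omega> - ws))\<^sup>2 \<partial>M) + A
            \<and> \<kappa> \<le> 1 - \<mu> * \<gamma> t)"
proof -
  interpret P: prob_space M by (rule M)
  define Xi :: "'a \<Rightarrow> nat \<times> nat \<times> 'c \<Rightarrow> 'x" where "Xi = (\<lambda>\<omega> (s, k, i). \<xi> s k i \<omega>)"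
  have sg_eq: "sg = sgG g Xi" by (simp add: sg_def Xi_def sgG_def fun_eq_iff)
  have xim: "\<xi> s k i \<in> measurable M N" for s k i
  proof -
    have "\<forall>idx\<in>UNIV. ((\<lambda>(s, k, i). \<xi> s k i) idx) \<in> measurable M N"
      using indep unfolding P.indep_vars_def by blast
    then show ?thesis by (metis (no_types, lifting) UNIV_I case_prod_conv)
  qed
  have Xim: "(\<lambda>\<omega>. Xi \<omega> idx) \<in> measurable M N" for idx
    using xim by (cases idx) (auto simp: Xi_def)
  have Lnn: "L \<ge> 0" using L_smooth_nonneg[OF smooth] .
  have pw_nn: "pw p i \<ge> 0" for i using p_pos[of i] by simp
  have pw_sum: "(\<Sum>i\<in>UNIV. pw p i) = 1" using p_sum by (simp add: pw_def)
  define Wb where "Wb s \<omega> = wbar p \<beta> E \<gamma> sg w0 s \<omega>" for s \<omega>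
  define Ua where "Ua s \<omega> = uanc p \<beta> E \<gamma> sg w0 s \<omega>" for s \<omega>
  define lc where "lc s k i \<omega> = loc \<beta> \<gamma> sg (Wb s \<omega>) (Ua s \<omega>) s k i \<omega>" for s k i \<omega>
  define yy where "yy s k i \<omega> = pert \<beta> \<gamma> sg (Wb s \<omega>) (Ua s \<omega>) s k i \<omega>" for s k i \<omega>
  define gg where "gg s k i \<omega> = g i (yy s k i \<omega>) (\<xi> s k i \<omega>)" for s k i \<omega>
  have yy_eq: "yy s k i \<omega> = \<beta> *\<^sub>R lc s k i \<omega> + (1 - \<beta>) *\<^sub>R Ua s \<omega> i" for s k i \<omega>
    by (simp add: yy_def lc_def pert_def)
  have lc_0: "lc s 0 i \<omega> = Wb s \<omega>" for s i \<omega> by (simp add: lc_def)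
  have lc_Suc: "lc s (Suc k) i \<omega> = lc s k i \<omega> - \<gamma> s *\<^sub>R gg s k i \<omega>" for s k i \<omega>
    by (simp add: lc_def gg_def yy_def pert_def sg_def)
  have Wb_0: "Wb 0 \<omega> = w0" for \<omega> by (simp add: Wb_def wbar_def)
  have Ua_0: "Ua 0 \<omega> i = w0" for \<omega> i by (simp add: Ua_def uanc_def)
  have Wb_Suc: "Wb (Suc s) \<omega> = (\<Sum>i\<in>UNIV. pw p i *\<^sub>R lc s E i \<omega>)" for s \<omega>
    by (simp add: Wb_def wbar_def lc_def Ua_def uanc_def Let_def)
  have Ua_Suc: "Ua (Suc s) \<omega> i = (1 / pw p i) *\<^sub>R (\<Sum>n\<in>UNIV. p i n *\<^sub>R lc s E n \<omega>)" for s \<omega> i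
    by (simp add: Wb_def wbar_def lc_def Ua_def uanc_def Let_def)
  have Ua_avg: "(\<Sum>i\<in>UNIV. pw p i *\<^sub>R Ua s \<omega> i) = Wb s \<omega>" for s \<omega>
  proof (cases s)
    case 0 then show ?thesis by (simp add: Ua_0 Wb_0 scaleR_sum_left[symmetric] pw_sum)
  next
    case (Suc s')
    have "(\<Sum>i\<in>UNIV. pw p i *\<^sub>R Ua s \<omega> i) = (\<Sum>i\<in>UNIV. \<Sum>n\<in>UNIV. p i n *\<^sub>R lc s' E n \<omega>)"
      using p_pos by (simp add: Suc Ua_Suc scaleR_sum_right less_imp_neq[OF p_pos, symmetric])
    also have "\<dots> = (\<Sum>n\<in>UNIV. \<Sum>i\<in>UNIV. p i n *\<^sub>R lc s' E n \<omega>)" by (rule sum.swap)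
    also have "\<dots> = (\<Sum>n\<in>UNIV. pw p n *\<^sub>R lc s' E n \<omega>)"
    proof (rule sum.cong[OF refl])
      fix n
      have "(\<Sum>i\<in>UNIV. p i n) = pw p n" unfolding pw_def by (rule sum.cong[OF refl]) (rule p_sym)
      then show "(\<Sum>i\<in>UNIV. p i n *\<^sub>R lc s' E n \<omega>) = pw p n *\<^sub>R lc s' E n \<omega>"
        by (simp add: scaleR_sum_left[symmetric])
    qed
    finally show ?thesis by (simp add: Suc Wb_Suc)
  qed
  have st_m: "Wb s \<in> borel_measurable M \<and> (\<forall>i. (\<lambda>\<omega>. Ua s \<omega> i) \<in> borel_measurable M)" for s
  proof -
    have "(\<lambda>a. fst (st p \<beta> E \<gamma> (sgG g Xi) w0 s a)) \<in> borel_measurable M \<and>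
         (\<forall>n. (\<lambda>a. snd (st p \<beta> E \<gamma> (sgG g Xi) w0 s a) n) \<in> borel_measurable M)"
      by (rule st_meas[OF g_meas]) (rule Xim)
    moreover have "Wb s = (\<lambda>a. fst (st p \<beta> E \<gamma> (sgG g Xi) w0 s a))"
      by (simp add: fun_eq_iff Wb_def wbar_def sg_eq)
    moreover have "(\<lambda>a. Ua s a i) = (\<lambda>a. snd (st p \<beta> E \<gamma> (sgG g Xi) w0 s a) i)" for i
      by (simp add: fun_eq_iff Ua_def uanc_def sg_eq)
    ultimately show ?thesis by simp
  qed
  have lc_m: "lc s k i \<in> borel_measurable M" for s k i
  proof -
    have "(\<lambda>\<omega>. loc \<beta> \<gamma> (sgG g Xi) (Wb s \<omega>) (Ua s \<omega>) s k i \<omega>) \<in> borel_measurable M"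
      using st_m[of s] Xim by (intro loc_meas[OF g_meas]) auto
    moreover have "lc s k i = (\<lambda>\<omega>. loc \<beta> \<gamma> (sgG g Xi) (Wb s \<omega>) (Ua s \<omega>) s k i \<omega>)"
      by (simp add: fun_eq_iff lc_def sg_eq)
    ultimately show ?thesis by simp
  qed
  have Ua_m: "(\<lambda>\<omega>. Ua s \<omega> i) \<in> borel_measurable M" for s i using st_m by blast
  have yy_m: "yy s k i \<in> borel_measurable M" for s k i
    unfolding yy_eq[abs_def] using lc_m Ua_m by measurable
  have gg_m: "gg s k i \<in> borel_measurable M" for s k i
    unfolding gg_def[abs_def] by (rule g_comp_meas[OF g_meas yy_m xim])
  have gg_sqi: "sqi M (gg s k i)" for s k i
    using gg_m second_moment[of i s k] by (simp add: sqi_def gg_def yy_def Wb_def Ua_def)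
  have gg_bd: "(\<integral>\<omega>. (norm (gg s k i \<omega>))\<^sup>2 \<partial>M) \<le> G\<^sup>2" for s k i
    using second_moment[of i s k] by (simp add: gg_def yy_def Wb_def Ua_def)
  have lc_sqi_gen: "sqi M (lc s k i)" if "sqi M (Wb s)" for s k i
  proof (induction k)
    case 0 then show ?case using that by (simp add: lc_0[abs_def])
  next
    case (Suc k) then show ?case unfolding lc_Suc[abs_def]
      by (intro sqi_diff sqi_scaleR gg_sqi)
  qed
  have all_sqi: "sqi M (Wb s) \<and> (\<forall>i. sqi M (\<lambda>\<omega>. Ua s \<omega> i))" for s
  proof (induction s)
    case 0 then show ?case by (simp add: Wb_0[abs_def] Ua_0 sqi_const[OF M])
  next
    case (Suc s)
    then have l: "sqi M (lc s E n)" for n using lc_sqi_gen by blast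
    show ?case unfolding Wb_Suc[abs_def] Ua_Suc
      by (intro conjI allI sqi_sum[OF M] sqi_scaleR l)
  qed
  have Wb_sqi: "sqi M (Wb s)" for s using all_sqi by blast
  have Ua_sqi: "sqi M (\<lambda>\<omega>. Ua s \<omega> i)" for s i using all_sqi by blast
  have lc_sqi: "sqi M (lc s k i)" for s k i using lc_sqi_gen Wb_sqi by blast
  have yy_sqi: "sqi M (yy s k i)" for s k i
    unfolding yy_eq[abs_def] by (intro sqi_add sqi_scaleR lc_sqi Ua_sqi)
  define \<eta> where "\<eta> = \<beta> * \<gamma> t"
  define v where "v k \<omega> = (\<Sum>i\<in>UNIV. pw p i *\<^sub>R yy t k i \<omega>)" for k \<omega>
  have v_sqi: "sqi M (v k)" for k unfolding v_def[abs_def] by (intro sqi_sum[OF M] sqi_scaleR yy_sqi)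
  have v_0: "v 0 \<omega> = Wb t \<omega>" for \<omega>
  proof -
    have "v 0 \<omega> = (\<Sum>i\<in>UNIV. \<beta> *\<^sub>R (pw p i *\<^sub>R Wb t \<omega>) + (1 - \<beta>) *\<^sub>R (pw p i *\<^sub>R Ua t \<omega> i))"
      by (simp add: v_def yy_eq lc_0 scaleR_add_right mult.commute)
    also have "\<dots> = \<beta> *\<^sub>R (\<Sum>i\<in>UNIV. pw p i *\<^sub>R Wb t \<omega>) + (1 - \<beta>) *\<^sub>R (\<Sum>i\<in>UNIV. pw p i *\<^sub>R Ua t \<omega> i)"
      by (simp only: sum.distrib scaleR_sum_right)
    also have "\<dots> = \<beta> *\<^sub>R Wb t \<omega> + (1 - \<beta>) *\<^sub>R Wb t \<omega>"
      by (simp only: scaleR_sum_left[symmetric] pw_sum scaleR_one Ua_avg)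
    also have "\<dots> = Wb t \<omega>" by (simp add: scaleR_left_distrib[symmetric])
    finally show ?thesis .
  qed
  have v_Suc: "v (Suc k) \<omega> = v k \<omega> - \<eta> *\<^sub>R (\<Sum>i\<in>UNIV. pw p i *\<^sub>R gg t k i \<omega>)" for k \<omega>
    by (simp add: v_def yy_eq lc_Suc \<eta>_def algebra_simps scaleR_sum_right sum_subtractf sum.distrib)
  have v_E: "Wb (Suc t) \<omega> = (1 / \<beta>) *\<^sub>R v E \<omega> + (1 - 1 / \<beta>) *\<^sub>R Wb t \<omega>" for \<omega>
  proof -
    have "v E \<omega> = (\<Sum>i\<in>UNIV. \<beta> *\<^sub>R (pw p i *\<^sub>R lc t E i \<omega>) + (1 - \<beta>) *\<^sub>R (pw p i *\<^sub>R Ua t \<omega> i))"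
      by (simp add: v_def yy_eq scaleR_add_right mult.commute)
    also have "\<dots> = \<beta> *\<^sub>R (\<Sum>i\<in>UNIV. pw p i *\<^sub>R lc t E i \<omega>) + (1 - \<beta>) *\<^sub>R (\<Sum>i\<in>UNIV. pw p i *\<^sub>R Ua t \<omega> i)"
      by (simp only: sum.distrib scaleR_sum_right)
    also have "\<dots> = \<beta> *\<^sub>R Wb (Suc t) \<omega> + (1 - \<beta>) *\<^sub>R Wb t \<omega>"
      by (simp only: Ua_avg Wb_Suc)
    finally have "v E \<omega> = \<beta> *\<^sub>R Wb (Suc t) \<omega> + (1 - \<beta>) *\<^sub>R Wb t \<omega>" .
    then have "(1 / \<beta>) *\<^sub>R v E \<omega> + (1 - 1 / \<beta>) *\<^sub>R Wb t \<omega> =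
        (1 / \<beta> * \<beta>) *\<^sub>R Wb (Suc t) \<omega> + (1 / \<beta> * (1 - \<beta>) + (1 - 1 / \<beta>)) *\<^sub>R Wb t \<omega>"
      by (simp add: scaleR_add_right scaleR_add_left)
    also have "1 / \<beta> * \<beta> = 1" using \<beta> by simp
    also have "1 / \<beta> * (1 - \<beta>) + (1 - 1 / \<beta>) = 0" using \<beta> by (simp add: field_simps)
    finally show ?thesis by simp
  qed
  have v_diff: "v k \<omega> - Wb t \<omega> = - \<eta> *\<^sub>R (\<Sum>j<k. \<Sum>i\<in>UNIV. pw p i *\<^sub>R gg t j i \<omega>)" for k \<omega>
    by (induction k) (simp_all add: v_0 v_Suc algebra_simps)
  have lc_diff: "lc t k i \<omega> - Wb t \<omega> = - \<gamma> t *\<^sub>R (\<Sum>j<k. gg t j i \<omega>)" for k i \<omega>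
    by (induction k) (simp_all add: lc_0 lc_Suc algebra_simps)
  have key: "integrable M (\<lambda>\<omega>. (v k \<omega> - ws) \<bullet> dF i (yy t k i \<omega>)) \<and>
      (\<integral>\<omega>. (v k \<omega> - ws) \<bullet> gg t k i \<omega> \<partial>M) = (\<integral>\<omega>. (v k \<omega> - ws) \<bullet> dF i (yy t k i \<omega>) \<partial>M)" for k i
  proof -
    define I :: "(nat \<times> nat \<times> 'c) set" where "I = {(s, j, n). s < t \<or> (s = t \<and> j < k)}"
    define J :: "(nat \<times> nat \<times> 'c) set" where "J = {(t, k, i)}"
    define Z1 where "Z1 = (\<lambda>\<omega>. restrict (\<lambda>idx. (\<lambda>(s, k, i). \<xi> s k i) idx \<omega>) I)"
    define Z2 where "Z2 = (\<lambda>\<omega>. restrict (\<lambda>idx. (\<lambda>(s, k, i). \<xi> s k i) idx \<omega>) J)"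
    have ind2: "P.indep_var (PiM I (\<lambda>_. N)) Z1 (PiM J (\<lambda>_. N)) Z2"
      unfolding Z1_def Z2_def by (rule P.indep_var_restrict[OF indep]) (auto simp: I_def J_def)
    have Z1m: "Z1 \<in> measurable M (PiM I (\<lambda>_. N))" and Z2m: "Z2 \<in> measurable M (PiM J (\<lambda>_. N))"
      using ind2 unfolding P.indep_var_distribution_eq by auto
    define sgI where "sgI = sgG g (\<lambda>z::nat \<times> nat \<times> 'c \<Rightarrow> 'x. z)"
    define WZ where "WZ z = wbar p \<beta> E \<gamma> sgI w0 t z" for z
    define UZ where "UZ z = uanc p \<beta> E \<gamma> sgI w0 t z" for z
    define yZ where "yZ n z = \<beta> *\<^sub>R loc \<beta> \<gamma> sgI (WZ z) (UZ z) t k n z + (1 - \<beta>) *\<^sub>R UZ z n" for n z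
    define vZ where "vZ z = (\<Sum>n\<in>UNIV. pw p n *\<^sub>R yZ n z)" for z
    have agr_st: "st p \<beta> E \<gamma> sgI w0 t (Z1 \<omega>) = st p \<beta> E \<gamma> sg w0 t \<omega>" for \<omega>
      unfolding sgI_def sg_eq by (rule st_agree) (auto simp: Z1_def I_def Xi_def)
    have agr_W: "WZ (Z1 \<omega>) = Wb t \<omega>" and agr_U: "UZ (Z1 \<omega>) = Ua t \<omega>" for \<omega>
      using agr_st by (simp_all add: WZ_def UZ_def Wb_def Ua_def wbar_def uanc_def)
    have agr_y: "yZ n (Z1 \<omega>) = yy t k n \<omega>" for n \<omega>
    proof -
      have "loc \<beta> \<gamma> sgI (Wb t \<omega>) (Ua t \<omega>) t k n (Z1 \<omega>) = loc \<beta> \<gamma> (sgG g Xi) (Wb t \<omega>) (Ua t \<omega>) t k n \<omega>"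
        unfolding sgI_def by (rule loc_agree) (auto simp: Z1_def I_def Xi_def)
      then show ?thesis by (simp add: yZ_def agr_W agr_U yy_eq lc_def sg_eq)
    qed
    have agr_v: "vZ (Z1 \<omega>) = v k \<omega>" for \<omega> by (simp add: vZ_def v_def agr_y)
    have compm: "(\<lambda>z. z idx) \<in> measurable (PiM I (\<lambda>_. N)) N" if "idx \<in> I" for idx
      using that by (rule measurable_component_singleton)
    have stZm: "(\<lambda>z. fst (st p \<beta> E \<gamma> sgI w0 t z)) \<in> borel_measurable (PiM I (\<lambda>_. N)) \<and>
        (\<forall>n. (\<lambda>z. snd (st p \<beta> E \<gamma> sgI w0 t z) n) \<in> borel_measurable (PiM I (\<lambda>_. N)))"
      unfolding sgI_def by (rule st_meas[OF g_meas]) (auto intro!: compm simp: I_def)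
    have WZe: "WZ = (\<lambda>z. fst (st p \<beta> E \<gamma> sgI w0 t z))" by (simp add: fun_eq_iff WZ_def wbar_def)
    have UZe: "(\<lambda>z. UZ z n) = (\<lambda>z. snd (st p \<beta> E \<gamma> sgI w0 t z) n)" for n
      by (simp add: fun_eq_iff UZ_def uanc_def)
    have WZm: "WZ \<in> borel_measurable (PiM I (\<lambda>_. N))" using stZm WZe by simp
    have UZm: "(\<lambda>z. UZ z n) \<in> borel_measurable (PiM I (\<lambda>_. N))" for n using stZm UZe by simp
    have lZm: "(\<lambda>z. loc \<beta> \<gamma> sgI (WZ z) (UZ z) t k n z) \<in> borel_measurable (PiM I (\<lambda>_. N))" for n
      unfolding sgI_def by (rule loc_meas[OF g_meas WZm UZm]) (auto intro!: compm simp: I_def)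
    have yZm: "(\<lambda>z. yZ n z) \<in> borel_measurable (PiM I (\<lambda>_. N))" for n
      unfolding yZ_def by (intro borel_measurable_add borel_measurable_scaleR borel_measurable_const lZm UZm)
    have vZm: "vZ \<in> borel_measurable (PiM I (\<lambda>_. N))"
      unfolding vZ_def[abs_def] by (intro borel_measurable_sum borel_measurable_scaleR borel_measurable_const yZm)
    define h where "h zx = (vZ (fst zx) - ws) \<bullet> g i (yZ i (fst zx)) (snd zx (t, k, i))" for zx
    have hm: "h \<in> borel_measurable (PiM I (\<lambda>_. N) \<Otimes>\<^sub>M PiM J (\<lambda>_. N))"
    proof -
      have a: "(\<lambda>zx. vZ (fst zx)) \<in> borel_measurable (PiM I (\<lambda>_. N) \<Otimes>\<^sub>M PiM J (\<lambda>_. N))"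
        by (rule measurable_compose[OF measurable_fst vZm])
      have b: "(\<lambda>zx. yZ i (fst zx)) \<in> borel_measurable (PiM I (\<lambda>_. N) \<Otimes>\<^sub>M PiM J (\<lambda>_. N))"
        by (rule measurable_compose[OF measurable_fst yZm])
      have c: "(\<lambda>zx. snd zx (t, k, i)) \<in> measurable (PiM I (\<lambda>_. N) \<Otimes>\<^sub>M PiM J (\<lambda>_. N)) N"
        by (rule measurable_compose[OF measurable_snd measurable_component_singleton]) (simp add: J_def)
      have "(\<lambda>zx. g i (yZ i (fst zx)) (snd zx (t, k, i))) \<in> borel_measurable (PiM I (\<lambda>_. N) \<Otimes>\<^sub>M PiM J (\<lambda>_. N))"
        by (rule g_comp_meas[OF g_meas b c])
      then show ?thesis unfolding h_def[abs_def]
        by (intro borel_measurable_inner borel_measurable_diff a borel_measurable_const)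
    qed
    have hZ: "h (Z1 \<omega>, Z2 \<omega>) = (v k \<omega> - ws) \<bullet> gg t k i \<omega>" for \<omega>
      by (simp add: h_def agr_v agr_y gg_def Z2_def J_def)
    have hi: "integrable M (\<lambda>\<omega>. h (Z1 \<omega>, Z2 \<omega>))"
      unfolding hZ by (intro sqi_inner sqi_diff v_sqi sqi_const[OF M] gg_sqi)
    note II = indep_integral[OF M ind2 hm hi]
    define H where "H z = (vZ z - ws) \<bullet> dF i (yZ i z)" for z
    have inner: "(\<integral>x. h (z, x) \<partial>distr M (PiM J (\<lambda>_. N)) Z2) = H z" for z
    proof -
      have gm1: "(\<lambda>x'. g i (yZ i z) x') \<in> borel_measurable N"
        by (rule g_comp_meas[OF g_meas borel_measurable_const measurable_ident_sets[OF refl]])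
      have f1m: "(\<lambda>x'. (vZ z - ws) \<bullet> g i (yZ i z) x') \<in> borel_measurable N"
        using gm1 by (intro borel_measurable_inner borel_measurable_const)
      have comp: "(\<lambda>x. x (t, k, i)) \<in> measurable (PiM J (\<lambda>_. N)) N"
        by (rule measurable_component_singleton) (simp add: J_def)
      have "(\<integral>x. h (z, x) \<partial>distr M (PiM J (\<lambda>_. N)) Z2) = (\<integral>x. (\<lambda>x'. (vZ z - ws) \<bullet> g i (yZ i z) x') (x (t, k, i)) \<partial>distr M (PiM J (\<lambda>_. N)) Z2)"
        by (simp add: h_def)
      also have "\<dots> = (\<integral>\<omega>. (\<lambda>x'. (vZ z - ws) \<bullet> g i (yZ i z) x') (Z2 \<omega> (t, k, i)) \<partial>M)"
        by (rule integral_distr[OF Z2m measurable_compose[OF comp f1m]])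
      also have "\<dots> = (\<integral>\<omega>. (\<lambda>x'. (vZ z - ws) \<bullet> g i (yZ i z) x') (\<xi> t k i \<omega>) \<partial>M)"
        by (simp add: Z2_def J_def)
      also have "\<dots> = (\<integral>x'. (vZ z - ws) \<bullet> g i (yZ i z) x' \<partial>distr M N (\<xi> t k i))"
        by (rule integral_distr[OF xim f1m, symmetric])
      also have "\<dots> = (vZ z - ws) \<bullet> (\<integral>x'. g i (yZ i z) x' \<partial>distr M N (\<xi> t k i))"
        using unbiased[of t k i "yZ i z"] by (intro integral_inner_right) auto
      also have "\<dots> = H z" using unbiased[of t k i "yZ i z"] by (simp add: H_def)
      finally show ?thesis .
    qed
    have dFc: "continuous_on UNIV (dF i)"
    proof -
      have "lipschitz_on L UNIV (dF i)" using smooth[of i] Lnn unfolding L_smooth_def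
        by (intro lipschitz_onI) (auto simp: dist_norm)
      then show ?thesis by (rule lipschitz_on_continuous_on)
    qed
    have Hm: "H \<in> borel_measurable (PiM I (\<lambda>_. N))"
      unfolding H_def[abs_def]
      by (intro borel_measurable_inner borel_measurable_diff vZm borel_measurable_const borel_measurable_continuous_on[OF dFc] yZm)
    have Hi: "integrable (distr M (PiM I (\<lambda>_. N)) Z1) H"
      using II(1) by (simp add: inner)
    have HZ: "H (Z1 \<omega>) = (v k \<omega> - ws) \<bullet> dF i (yy t k i \<omega>)" for \<omega> by (simp add: H_def agr_v agr_y)
    have "integrable M (\<lambda>\<omega>. H (Z1 \<omega>))" using Hi integrable_distr_eq[OF Z1m Hm] by simp
    then have int: "integrable M (\<lambda>\<omega>. (v k \<omega> - ws) \<bullet> dF i (yy t k i \<omega>))" by (simp add: HZ)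
    have "(\<integral>\<omega>. (v k \<omega> - ws) \<bullet> gg t k i \<omega> \<partial>M) = (\<integral>\<omega>. h (Z1 \<omega>, Z2 \<omega>) \<partial>M)" by (simp add: hZ)
    also have "\<dots> = (\<integral>z. H z \<partial>distr M (PiM I (\<lambda>_. N)) Z1)" using II(2) by (simp add: inner)
    also have "\<dots> = (\<integral>\<omega>. H (Z1 \<omega>) \<partial>M)" by (rule integral_distr[OF Z1m Hm])
    also have "\<dots> = (\<integral>\<omega>. (v k \<omega> - ws) \<bullet> dF i (yy t k i \<omega>) \<partial>M)" by (simp add: HZ)
    finally show ?thesis using int by simp
  qed
  define Qs where "Qs s k \<omega> = (\<Sum>j<k. \<Sum>i\<in>UNIV. pw p i * (norm (gg s j i \<omega>))\<^sup>2)" for s k \<omega>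
  have gg2_int: "integrable M (\<lambda>\<omega>. (norm (gg s j i \<omega>))\<^sup>2)" for s j i using sqi_norm2[OF gg_sqi] .
  have Qs_int: "integrable M (Qs s k)" for s k
    unfolding Qs_def[abs_def] using gg2_int by simp
  have Qs_nn: "Qs s k \<omega> \<ge> 0" for s k \<omega>
    unfolding Qs_def by (intro sum_nonneg mult_nonneg_nonneg pw_nn) simp
  have Qs_bd: "(\<integral>\<omega>. Qs s k \<omega> \<partial>M) \<le> real k * G\<^sup>2" for s k
  proof -
    have "(\<integral>\<omega>. Qs s k \<omega> \<partial>M) = (\<Sum>j<k. \<Sum>i\<in>UNIV. pw p i * (\<integral>\<omega>. (norm (gg s j i \<omega>))\<^sup>2 \<partial>M))"
      unfolding Qs_def using gg2_int
      by (simp add: Bochner_Integration.integral_sum integrable_sum integrable_mult_right)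
    also have "\<dots> \<le> (\<Sum>j<k. \<Sum>i\<in>UNIV. pw p i * G\<^sup>2)"
      by (intro sum_mono mult_left_mono gg_bd pw_nn)
    also have "\<dots> = real k * G\<^sup>2" by (simp add: sum_distrib_right[symmetric] pw_sum)
    finally show ?thesis .
  qed
  have jen0: "(norm (\<Sum>i\<in>UNIV. pw p i *\<^sub>R z i))\<^sup>2 \<le> (\<Sum>i\<in>UNIV. pw p i * (norm (z i))\<^sup>2)" for z :: "'c \<Rightarrow> 'w"
    using wjensen[where a="pw p" and A=UNIV and z=z and c=0] pw_sum pw_nn by simp
  have vE_bd: "(norm (v E \<omega> - Wb t \<omega>))\<^sup>2 \<le> \<eta>\<^sup>2 * real E * Qs t E \<omega>" for \<omega>
  proof -
    have "(norm (v E \<omega> - Wb t \<omega>))\<^sup>2 = \<eta>\<^sup>2 * (norm (\<Sum>j<E. \<Sum>i\<in>UNIV. pw p i *\<^sub>R gg t j i \<omega>))\<^sup>2"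
      by (simp add: v_diff power_mult_distrib)
    also have "\<dots> \<le> \<eta>\<^sup>2 * (real E * (\<Sum>j<E. (norm (\<Sum>i\<in>UNIV. pw p i *\<^sub>R gg t j i \<omega>))\<^sup>2))"
      by (intro mult_left_mono sum_card_sq) simp
    also have "\<dots> \<le> \<eta>\<^sup>2 * (real E * Qs t E \<omega>)"
      unfolding Qs_def by (intro mult_left_mono sum_mono jen0) simp_all
    finally show ?thesis by simp
  qed
  have lc_bd: "(norm (lc s k i \<omega> - Wb s \<omega>))\<^sup>2 \<le> (\<gamma> s)\<^sup>2 * real k * (\<Sum>j<k. (norm (gg s j i \<omega>))\<^sup>2)" for s k i \<omega>
  proof -
    have ld: "lc s k i \<omega> - Wb s \<omega> = - \<gamma> s *\<^sub>R (\<Sum>j<k. gg s j i \<omega>)"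
      by (induction k) (simp_all add: lc_0 lc_Suc algebra_simps)
    have "(norm (lc s k i \<omega> - Wb s \<omega>))\<^sup>2 = (\<gamma> s)\<^sup>2 * (norm (\<Sum>j<k. gg s j i \<omega>))\<^sup>2"
      by (simp add: ld power_mult_distrib)
    also have "\<dots> \<le> (\<gamma> s)\<^sup>2 * (real k * (\<Sum>j<k. (norm (gg s j i \<omega>))\<^sup>2))"
      by (intro mult_left_mono sum_card_sq) simp
    finally show ?thesis by simp
  qed
  have lcQ: "(\<Sum>i\<in>UNIV. pw p i * (norm (lc s k i \<omega> - Wb s \<omega>))\<^sup>2) \<le> (\<gamma> s)\<^sup>2 * real k * Qs s k \<omega>" for s k \<omega>
  proof -
    have "(\<Sum>i\<in>UNIV. pw p i * (norm (lc s k i \<omega> - Wb s \<omega>))\<^sup>2) \<le> (\<Sum>i\<in>UNIV. pw p i * ((\<gamma> s)\<^sup>2 * real k * (\<Sum>j<k. (norm (gg s j i \<omega>))\<^sup>2)))"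
      by (intro sum_mono mult_left_mono lc_bd pw_nn)
    also have "\<dots> = (\<gamma> s)\<^sup>2 * real k * (\<Sum>i\<in>UNIV. \<Sum>j<k. pw p i * (norm (gg s j i \<omega>))\<^sup>2)"
      by (simp add: sum_distrib_left mult.left_commute)
    also have "(\<Sum>i\<in>UNIV. \<Sum>j<k. pw p i * (norm (gg s j i \<omega>))\<^sup>2) = Qs s k \<omega>"
      unfolding Qs_def by (rule sum.swap)
    finally show ?thesis .
  qed
  define Rb where "Rb \<omega> = (if t = 0 then 0 else (\<gamma> (t - 1))\<^sup>2 * real E * Qs (t - 1) E \<omega>)" for \<omega>
  have Rb_int: "integrable M Rb"
    unfolding Rb_def[abs_def] using Qs_int by (cases "t = 0") simp_all
  have Rb_bd: "(\<integral>\<omega>. Rb \<omega> \<partial>M) \<le> (if t \<ge> 1 then 1 else 0) * (\<gamma> (t - 1))\<^sup>2 * real E * real E * G\<^sup>2"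
  proof (cases "t = 0")
    case True then show ?thesis by (simp add: Rb_def)
  next
    case False
    then have "(\<integral>\<omega>. Rb \<omega> \<partial>M) = (\<gamma> (t - 1))\<^sup>2 * real E * (\<integral>\<omega>. Qs (t - 1) E \<omega> \<partial>M)"
      by (simp add: Rb_def)
    also have "\<dots> \<le> (\<gamma> (t - 1))\<^sup>2 * real E * (real E * G\<^sup>2)"
      by (intro mult_left_mono Qs_bd) simp
    finally show ?thesis using False by simp
  qed
  have R_bd: "(\<Sum>i\<in>UNIV. pw p i * (norm (Ua t \<omega> i - Wb t \<omega>))\<^sup>2) \<le> Rb \<omega>" for \<omega>
  proof (cases t)
    case 0 then show ?thesis by (simp add: Rb_def Ua_0 Wb_0)
  next
    case (Suc s)
    have "(\<Sum>i\<in>UNIV. pw p i * (norm (Ua t \<omega> i - Wb t \<omega>))\<^sup>2) \<le> (\<Sum>i\<in>UNIV. pw p i * (norm (Ua t \<omega> i - Wb s \<omega>))\<^sup>2)"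
      using wvar_le[where a="pw p" and A=UNIV and z="Ua t \<omega>" and c="Wb s \<omega>"] pw_sum pw_nn
      by (simp add: Ua_avg)
    also have "\<dots> \<le> (\<Sum>i\<in>UNIV. pw p i * (\<Sum>n\<in>UNIV. (p i n / pw p i) * (norm (lc s E n \<omega> - Wb s \<omega>))\<^sup>2))"
    proof (intro sum_mono mult_left_mono pw_nn)
      fix i
      have ps: "(\<Sum>n\<in>UNIV. p i n / pw p i) = 1"
        using p_pos[of i] by (simp add: sum_divide_distrib[symmetric] pw_def)
      have "Ua t \<omega> i = (\<Sum>n\<in>UNIV. (p i n / pw p i) *\<^sub>R lc s E n \<omega>)"
        by (simp add: Suc Ua_Suc scaleR_sum_right divide_inverse mult.commute)
      then show "(norm (Ua t \<omega> i - Wb s \<omega>))\<^sup>2 \<le> (\<Sum>n\<in>UNIV. (p i n / pw p i) * (norm (lc s E n \<omega> - Wb s \<omega>))\<^sup>2)"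
        using wjensen[where a="\<lambda>n. p i n / pw p i" and A=UNIV and z="\<lambda>n. lc s E n \<omega>" and c="Wb s \<omega>"] ps p_nonneg p_pos[of i]
        by simp
    qed
    also have "\<dots> = (\<Sum>i\<in>UNIV. \<Sum>n\<in>UNIV. p i n * (norm (lc s E n \<omega> - Wb s \<omega>))\<^sup>2)"
      using p_pos by (simp add: sum_distrib_left less_imp_neq[OF p_pos, symmetric])
    also have "\<dots> = (\<Sum>n\<in>UNIV. \<Sum>i\<in>UNIV. p i n * (norm (lc s E n \<omega> - Wb s \<omega>))\<^sup>2)" by (rule sum.swap)
    also have "\<dots> = (\<Sum>n\<in>UNIV. pw p n * (norm (lc s E n \<omega> - Wb s \<omega>))\<^sup>2)"
    proof (rule sum.cong[OF refl])
      fix n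
      have "(\<Sum>i\<in>UNIV. p i n) = pw p n" unfolding pw_def by (rule sum.cong[OF refl]) (rule p_sym)
      then show "(\<Sum>i\<in>UNIV. p i n * (norm (lc s E n \<omega> - Wb s \<omega>))\<^sup>2) = pw p n * (norm (lc s E n \<omega> - Wb s \<omega>))\<^sup>2"
        by (simp add: sum_distrib_right[symmetric])
    qed
    also have "\<dots> \<le> (\<gamma> s)\<^sup>2 * real E * Qs s E \<omega>" by (rule lcQ)
    finally show ?thesis by (simp add: Rb_def Suc)
  qed
  define Dk where "Dk k \<omega> = (\<Sum>i\<in>UNIV. pw p i * (norm (v k \<omega> - yy t k i \<omega>))\<^sup>2)" for k \<omega>
  have Dk_int: "integrable M (Dk k)" for k
    unfolding Dk_def[abs_def]
    using sqi_norm2[OF sqi_diff[OF v_sqi yy_sqi]] by simp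
  have Dk_bd: "Dk k \<omega> \<le> 2 * \<beta>\<^sup>2 * ((\<gamma> t)\<^sup>2 * real k * Qs t k \<omega>) + 2 * (1 - \<beta>)\<^sup>2 * Rb \<omega>" for k \<omega>
  proof -
    have "Dk k \<omega> \<le> (\<Sum>i\<in>UNIV. pw p i * (norm (yy t k i \<omega> - Wb t \<omega>))\<^sup>2)"
      using wvar_le[where a="pw p" and A=UNIV and z="\<lambda>i. yy t k i \<omega>" and c="Wb t \<omega>"] pw_sum pw_nn
      by (simp add: Dk_def v_def norm_minus_commute)
    also have "\<dots> \<le> (\<Sum>i\<in>UNIV. pw p i * (2 * \<beta>\<^sup>2 * (norm (lc t k i \<omega> - Wb t \<omega>))\<^sup>2 + 2 * (1 - \<beta>)\<^sup>2 * (norm (Ua t \<omega> i - Wb t \<omega>))\<^sup>2))"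
    proof (intro sum_mono mult_left_mono pw_nn)
      fix i
      have "yy t k i \<omega> - Wb t \<omega> = \<beta> *\<^sub>R (lc t k i \<omega> - Wb t \<omega>) + (1 - \<beta>) *\<^sub>R (Ua t \<omega> i - Wb t \<omega>)"
        by (simp add: yy_eq algebra_simps)
      then have "(norm (yy t k i \<omega> - Wb t \<omega>))\<^sup>2 \<le> 2 * (norm (\<beta> *\<^sub>R (lc t k i \<omega> - Wb t \<omega>)))\<^sup>2 + 2 * (norm ((1 - \<beta>) *\<^sub>R (Ua t \<omega> i - Wb t \<omega>)))\<^sup>2"
        using sq_add_le by metis
      then show "(norm (yy t k i \<omega> - Wb t \<omega>))\<^sup>2 \<le> 2 * \<beta>\<^sup>2 * (norm (lc t k i \<omega> - Wb t \<omega>))\<^sup>2 + 2 * (1 - \<beta>)\<^sup>2 * (norm (Ua t \<omega> i - Wb t \<omega>))\<^sup>2"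
        by (simp add: power_mult_distrib)
    qed
    also have "\<dots> = 2 * \<beta>\<^sup>2 * (\<Sum>i\<in>UNIV. pw p i * (norm (lc t k i \<omega> - Wb t \<omega>))\<^sup>2) + 2 * (1 - \<beta>)\<^sup>2 * (\<Sum>i\<in>UNIV. pw p i * (norm (Ua t \<omega> i - Wb t \<omega>))\<^sup>2)"
      by (simp add: sum.distrib sum_distrib_left algebra_simps)
    also have "\<dots> \<le> 2 * \<beta>\<^sup>2 * ((\<gamma> t)\<^sup>2 * real k * Qs t k \<omega>) + 2 * (1 - \<beta>)\<^sup>2 * Rb \<omega>"
      by (intro add_mono mult_left_mono lcQ R_bd) simp_all
    finally show ?thesis .
  qed
  have dF_d: "\<And>i x. (F i has_derivative (\<lambda>h. dF i x \<bullet> h)) (at x)" using smooth unfolding L_smooth_def by blast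
  have each: "(vv - ws) \<bullet> dF i y \<ge> F i vv - F i ws + \<mu> / 2 * (norm (y - ws))\<^sup>2 - L * (norm (vv - y))\<^sup>2" for i vv y
  proof -
    have t1: "F i ws \<ge> F i y + dF i y \<bullet> (ws - y) + \<mu> / 2 * (norm (ws - y))\<^sup>2"
      by (rule tangent_sc[OF sconv dF_d])
    then have t1': "F i ws \<ge> F i y + dF i y \<bullet> (ws - y) + \<mu> / 2 * (norm (y - ws))\<^sup>2"
      by (simp add: norm_minus_commute)
    have t2: "F i vv \<le> F i y + dF i y \<bullet> (vv - y) + L * (norm (vv - y))\<^sup>2"
      by (rule smooth_upper[OF smooth])
    have "(vv - ws) \<bullet> dF i y = dF i y \<bullet> (vv - y) - dF i y \<bullet> (ws - y)"
      by (simp add: inner_diff_left inner_diff_right inner_commute)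
    then show ?thesis using t1' t2 by linarith
  qed
  have pw_ineq: "(\<Sum>i\<in>UNIV. pw p i * ((v k \<omega> - ws) \<bullet> dF i (yy t k i \<omega>))) \<ge> \<mu> / 2 * (norm (v k \<omega> - ws))\<^sup>2 - L * Dk k \<omega>" for k \<omega>
  proof -
    have s1: "(\<Sum>i\<in>UNIV. pw p i * ((v k \<omega> - ws) \<bullet> dF i (yy t k i \<omega>))) \<ge>
        (\<Sum>i\<in>UNIV. pw p i * (F i (v k \<omega>) - F i ws + \<mu> / 2 * (norm (yy t k i \<omega> - ws))\<^sup>2 - L * (norm (v k \<omega> - yy t k i \<omega>))\<^sup>2))"
      by (intro sum_mono mult_left_mono each pw_nn)
    have s2: "(\<Sum>i\<in>UNIV. pw p i * (F i (v k \<omega>) - F i ws + \<mu> / 2 * (norm (yy t k i \<omega> - ws))\<^sup>2 - L * (norm (v k \<omega> - yy t k i \<omega>))\<^sup>2))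
        = (Fb (v k \<omega>) - Fb ws) + \<mu> / 2 * (\<Sum>i\<in>UNIV. pw p i * (norm (yy t k i \<omega> - ws))\<^sup>2) - L * Dk k \<omega>"
      by (simp add: Fb_def Dk_def algebra_simps sum.distrib sum_subtractf sum_distrib_left)
    have s3: "Fb (v k \<omega>) - Fb ws \<ge> 0" using ws_min[of "v k \<omega>"] by simp
    have s4: "(norm (v k \<omega> - ws))\<^sup>2 \<le> (\<Sum>i\<in>UNIV. pw p i * (norm (yy t k i \<omega> - ws))\<^sup>2)"
      using wjensen[where a="pw p" and A=UNIV and z="\<lambda>i. yy t k i \<omega>" and c=ws] pw_sum pw_nn by (simp add: v_def)
    have s5: "\<mu> / 2 * (norm (v k \<omega> - ws))\<^sup>2 \<le> \<mu> / 2 * (\<Sum>i\<in>UNIV. pw p i * (norm (yy t k i \<omega> - ws))\<^sup>2)"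
      using s4 \<mu>_pos by (intro mult_left_mono) auto
    show ?thesis using s1 s2 s3 s5 by linarith
  qed
  have \<eta>_nn: "\<eta> \<ge> 0" using \<beta> \<gamma>_pos[of t] by (simp add: \<eta>_def)
  have step: "(\<integral>\<omega>. (norm (v (Suc k) \<omega> - ws))\<^sup>2 \<partial>M) \<le> (1 - \<mu> * \<eta>) * (\<integral>\<omega>. (norm (v k \<omega> - ws))\<^sup>2 \<partial>M)
      + 2 * \<eta> * L * (\<integral>\<omega>. Dk k \<omega> \<partial>M) + \<eta>\<^sup>2 * G\<^sup>2" for k
  proof -
    define Sg where "Sg \<omega> = (\<Sum>i\<in>UNIV. pw p i *\<^sub>R gg t k i \<omega>)" for \<omega>
    have Sg_sqi: "sqi M Sg" unfolding Sg_def[abs_def] by (intro sqi_sum[OF M] sqi_scaleR gg_sqi)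
    have ident: "(norm (v (Suc k) \<omega> - ws))\<^sup>2 = (norm (v k \<omega> - ws))\<^sup>2
        - 2 * \<eta> * (\<Sum>i\<in>UNIV. pw p i * ((v k \<omega> - ws) \<bullet> gg t k i \<omega>)) + \<eta>\<^sup>2 * (norm (Sg \<omega>))\<^sup>2" for \<omega>
    proof -
      have eq: "v (Suc k) \<omega> - ws = (v k \<omega> - ws) - \<eta> *\<^sub>R Sg \<omega>" by (simp add: v_Suc Sg_def)
      have a: "(norm (v (Suc k) \<omega> - ws))\<^sup>2 = (norm (v k \<omega> - ws))\<^sup>2 - 2 * ((v k \<omega> - ws) \<bullet> (\<eta> *\<^sub>R Sg \<omega>)) + (norm (\<eta> *\<^sub>R Sg \<omega>))\<^sup>2"
        unfolding eq by (rule norm_diff_sq)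
      have b: "(v k \<omega> - ws) \<bullet> (\<eta> *\<^sub>R Sg \<omega>) = \<eta> * (\<Sum>i\<in>UNIV. pw p i * ((v k \<omega> - ws) \<bullet> gg t k i \<omega>))"
        by (simp add: Sg_def inner_sum_right)
      have c: "(norm (\<eta> *\<^sub>R Sg \<omega>))\<^sup>2 = \<eta>\<^sup>2 * (norm (Sg \<omega>))\<^sup>2" by (simp add: power_mult_distrib)
      show ?thesis unfolding a b c by simp
    qed
    have i1: "integrable M (\<lambda>\<omega>. (norm (v k \<omega> - ws))\<^sup>2)" by (intro sqi_norm2 sqi_diff v_sqi sqi_const[OF M])
    have i2: "integrable M (\<lambda>\<omega>. (v k \<omega> - ws) \<bullet> gg t k i \<omega>)" for i by (intro sqi_inner sqi_diff v_sqi sqi_const[OF M] gg_sqi)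
    have i3: "integrable M (\<lambda>\<omega>. (norm (Sg \<omega>))\<^sup>2)" using sqi_norm2[OF Sg_sqi] .
    have i4: "integrable M (\<lambda>\<omega>. (v k \<omega> - ws) \<bullet> dF i (yy t k i \<omega>))" for i using key[of k i] by blast
    define S1 where "S1 = (\<Sum>i\<in>UNIV. pw p i * (\<integral>\<omega>. (v k \<omega> - ws) \<bullet> gg t k i \<omega> \<partial>M))"
    define S3 where "S3 = (\<integral>\<omega>. (norm (Sg \<omega>))\<^sup>2 \<partial>M)"
    have A1: "(\<integral>\<omega>. (norm (v (Suc k) \<omega> - ws))\<^sup>2 \<partial>M) = (\<integral>\<omega>. (norm (v k \<omega> - ws))\<^sup>2 \<partial>M) - 2 * \<eta> * S1 + \<eta>\<^sup>2 * S3"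
      unfolding ident S1_def S3_def using i1 i2 i3
      by (simp add: Bochner_Integration.integral_sum integrable_sum)
    have A2: "S1 = (\<integral>\<omega>. (\<Sum>i\<in>UNIV. pw p i * ((v k \<omega> - ws) \<bullet> dF i (yy t k i \<omega>))) \<partial>M)"
      unfolding S1_def using key[of k] i4 by (simp add: Bochner_Integration.integral_sum integrable_sum)
    have A3: "(\<integral>\<omega>. (\<Sum>i\<in>UNIV. pw p i * ((v k \<omega> - ws) \<bullet> dF i (yy t k i \<omega>))) \<partial>M) \<ge>
        (\<integral>\<omega>. \<mu> / 2 * (norm (v k \<omega> - ws))\<^sup>2 - L * Dk k \<omega> \<partial>M)"
      using i1 i4 Dk_int by (intro integral_mono pw_ineq) auto
    have A3': "(\<integral>\<omega>. \<mu> / 2 * (norm (v k \<omega> - ws))\<^sup>2 - L * Dk k \<omega> \<partial>M) = \<mu> / 2 * (\<integral>\<omega>. (norm (v k \<omega> - ws))\<^sup>2 \<partial>M) - L * (\<integral>\<omega>. Dk k \<omega> \<partial>M)"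
      using i1 Dk_int by simp
    have A4: "S3 \<le> G\<^sup>2"
    proof -
      have "S3 \<le> (\<integral>\<omega>. (\<Sum>i\<in>UNIV. pw p i * (norm (gg t k i \<omega>))\<^sup>2) \<partial>M)"
        unfolding S3_def Sg_def using i3 gg2_int by (intro integral_mono jen0) (auto simp: Sg_def)
      also have "\<dots> = (\<Sum>i\<in>UNIV. pw p i * (\<integral>\<omega>. (norm (gg t k i \<omega>))\<^sup>2 \<partial>M))"
        using gg2_int by (simp add: Bochner_Integration.integral_sum integrable_sum)
      also have "\<dots> \<le> (\<Sum>i\<in>UNIV. pw p i * G\<^sup>2)" by (intro sum_mono mult_left_mono gg_bd pw_nn)
      also have "\<dots> = G\<^sup>2" by (simp add: sum_distrib_right[symmetric] pw_sum)
      finally show ?thesis .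
    qed
    have m1: "2 * \<eta> * S1 \<ge> 2 * \<eta> * (\<mu> / 2 * (\<integral>\<omega>. (norm (v k \<omega> - ws))\<^sup>2 \<partial>M) - L * (\<integral>\<omega>. Dk k \<omega> \<partial>M))"
      using A2 A3 A3' \<eta>_nn by (intro mult_left_mono) auto
    have m2: "\<eta>\<^sup>2 * S3 \<le> \<eta>\<^sup>2 * G\<^sup>2" using A4 by (intro mult_left_mono) auto
    have "(\<integral>\<omega>. (norm (v (Suc k) \<omega> - ws))\<^sup>2 \<partial>M) \<le> (\<integral>\<omega>. (norm (v k \<omega> - ws))\<^sup>2 \<partial>M)
        - 2 * \<eta> * (\<mu> / 2 * (\<integral>\<omega>. (norm (v k \<omega> - ws))\<^sup>2 \<partial>M) - L * (\<integral>\<omega>. Dk k \<omega> \<partial>M)) + \<eta>\<^sup>2 * G\<^sup>2"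
      using A1 m1 m2 by linarith
    also have "\<dots> = (1 - \<mu> * \<eta>) * (\<integral>\<omega>. (norm (v k \<omega> - ws))\<^sup>2 \<partial>M) + 2 * \<eta> * L * (\<integral>\<omega>. Dk k \<omega> \<partial>M) + \<eta>\<^sup>2 * G\<^sup>2"
      by (simp add: algebra_simps)
    finally show ?thesis .
  qed
  have \<gamma>t: "\<gamma> t > 0" using \<gamma>_pos .
  have \<gamma>L: "\<gamma> t * L \<le> 1 / 2"
  proof (cases "L = 0")
    case True then show ?thesis by simp
  next
    case False
    then have "L > 0" using Lnn by simp
    moreover have "\<gamma> t \<le> 1 / (2 * L)" using \<gamma>_t by simp
    ultimately show ?thesis by (simp add: field_simps)
  qed
  have \<gamma>\<mu>: "\<beta> * \<mu> * \<gamma> t \<le> 1"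
  proof -
    have "\<gamma> t \<le> 1 / (\<beta> * \<mu>)" using \<gamma>_t by simp
    moreover have "\<beta> * \<mu> > 0" using \<beta> \<mu>_pos by simp
    ultimately show ?thesis by (simp add: field_simps)
  qed
  define q where "q = 1 - \<mu> * \<eta>"
  have q_eq: "q = 1 - \<beta> * \<mu> * \<gamma> t" by (simp add: q_def \<eta>_def algebra_simps)
  have q_nn: "q \<ge> 0" and q_le: "q \<le> 1" using \<gamma>\<mu> \<beta> \<mu>_pos \<gamma>t by (simp_all add: q_eq)
  define X2 where "X2 = (\<integral>\<omega>. (norm (Wb t \<omega> - ws))\<^sup>2 \<partial>M)"
  define ak where "ak k = (\<integral>\<omega>. (norm (v k \<omega> - ws))\<^sup>2 \<partial>M)" for k
  define cI where "cI = (if t \<ge> 1 then 1 else (0::real))"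
  have cI01: "cI \<ge> 0" "cI \<le> 1" by (simp_all add: cI_def)
  define B where "B = 2 * \<beta>\<^sup>2 * (\<gamma> t)\<^sup>2 * real E * real E * G\<^sup>2 + 2 * (1 - \<beta>)\<^sup>2 * (cI * (\<gamma> (t - 1))\<^sup>2 * real E * real E * G\<^sup>2)"
  have B_nn: "B \<ge> 0" unfolding B_def using cI01 by (intro add_nonneg_nonneg mult_nonneg_nonneg) auto
  define e' where "e' = 2 * \<eta> * L * B + \<eta>\<^sup>2 * G\<^sup>2"
  have e'_nn: "e' \<ge> 0" unfolding e'_def using \<eta>_nn Lnn B_nn by simp
  have ID_bd: "(\<integral>\<omega>. Dk k \<omega> \<partial>M) \<le> B" if "k \<le> E" for k
  proof -
    have "(\<integral>\<omega>. Dk k \<omega> \<partial>M) \<le> (\<integral>\<omega>. 2 * \<beta>\<^sup>2 * ((\<gamma> t)\<^sup>2 * real k * Qs t k \<omega>) + 2 * (1 - \<beta>)\<^sup>2 * Rb \<omega> \<partial>M)"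
      using Dk_int Qs_int Rb_int by (intro integral_mono Dk_bd) auto
    also have "\<dots> = 2 * \<beta>\<^sup>2 * ((\<gamma> t)\<^sup>2 * real k * (\<integral>\<omega>. Qs t k \<omega> \<partial>M)) + 2 * (1 - \<beta>)\<^sup>2 * (\<integral>\<omega>. Rb \<omega> \<partial>M)"
      using Qs_int Rb_int by simp
    also have "\<dots> \<le> 2 * \<beta>\<^sup>2 * ((\<gamma> t)\<^sup>2 * real k * (real k * G\<^sup>2)) + 2 * (1 - \<beta>)\<^sup>2 * (cI * (\<gamma> (t - 1))\<^sup>2 * real E * real E * G\<^sup>2)"
      using Qs_bd Rb_bd by (intro add_mono mult_left_mono) (auto simp: cI_def)
    also have "2 * \<beta>\<^sup>2 * ((\<gamma> t)\<^sup>2 * real k * (real k * G\<^sup>2)) = (2 * \<beta>\<^sup>2 * (\<gamma> t)\<^sup>2 * G\<^sup>2) * (real k * real k)"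
      by (simp add: algebra_simps)
    also have "\<dots> \<le> (2 * \<beta>\<^sup>2 * (\<gamma> t)\<^sup>2 * G\<^sup>2) * (real E * real E)"
      using that by (intro mult_left_mono mult_mono) auto
    finally show ?thesis by (simp add: B_def algebra_simps)
  qed
  have rec: "ak k \<le> q ^ k * X2 + real k * e'" if "k \<le> E" for k
    using that
  proof (induction k)
    case 0 then show ?case by (simp add: ak_def X2_def v_0)
  next
    case (Suc k)
    then have IH: "ak k \<le> q ^ k * X2 + real k * e'" by simp
    have "ak (Suc k) \<le> q * ak k + 2 * \<eta> * L * (\<integral>\<omega>. Dk k \<omega> \<partial>M) + \<eta>\<^sup>2 * G\<^sup>2"
      using step[of k] by (simp add: ak_def q_def)
    also have "2 * \<eta> * L * (\<integral>\<omega>. Dk k \<omega> \<partial>M) \<le> 2 * \<eta> * L * B"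
      using ID_bd[of k] Suc.prems \<eta>_nn Lnn by (intro mult_left_mono) auto
    also have "q * ak k \<le> q * (q ^ k * X2 + real k * e')" using IH q_nn by (rule mult_left_mono)
    also have "q * (q ^ k * X2 + real k * e') + 2 * \<eta> * L * B + \<eta>\<^sup>2 * G\<^sup>2 = q ^ Suc k * X2 + q * (real k * e') + e'"
      by (simp add: e'_def algebra_simps)
    also have "q * (real k * e') \<le> real k * e'"
      using q_le q_nn e'_nn by (intro mult_left_le_one_le) auto
    finally show ?case by (simp add: algebra_simps)
  qed
  have i_vE: "integrable M (\<lambda>\<omega>. (norm (v E \<omega> - ws))\<^sup>2)" by (intro sqi_norm2 sqi_diff v_sqi sqi_const[OF M])
  have i_W: "integrable M (\<lambda>\<omega>. (norm (Wb t \<omega> - ws))\<^sup>2)" by (intro sqi_norm2 sqi_diff Wb_sqi sqi_const[OF M])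
  have i_VW: "integrable M (\<lambda>\<omega>. (norm (v E \<omega> - Wb t \<omega>))\<^sup>2)" by (intro sqi_norm2 sqi_diff v_sqi Wb_sqi)
  define c3 where "c3 = - (1 / \<beta>) * (1 - 1 / \<beta>)"
  have c3_eq: "c3 = (1 - \<beta>) / \<beta>\<^sup>2" using \<beta> by (simp add: c3_def field_simps power2_eq_square)
  have c3_nn: "c3 \<ge> 0" using \<beta> by (simp add: c3_eq)
  have ptw: "(norm (Wb (Suc t) \<omega> - ws))\<^sup>2 = (1 / \<beta>) * (norm (v E \<omega> - ws))\<^sup>2 + (1 - 1 / \<beta>) * (norm (Wb t \<omega> - ws))\<^sup>2
      + c3 * (norm (v E \<omega> - Wb t \<omega>))\<^sup>2" for \<omega>
  proof -
    have "Wb (Suc t) \<omega> - ws = (1 / \<beta>) *\<^sub>R (v E \<omega> - ws) + (1 - 1 / \<beta>) *\<^sub>R (Wb t \<omega> - ws)"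
      by (simp add: v_E algebra_simps)
    then have "(norm (Wb (Suc t) \<omega> - ws))\<^sup>2 = (1 / \<beta>) * (norm (v E \<omega> - ws))\<^sup>2 + (1 - 1 / \<beta>) * (norm (Wb t \<omega> - ws))\<^sup>2
        - (1 / \<beta>) * (1 - 1 / \<beta>) * (norm ((v E \<omega> - ws) - (Wb t \<omega> - ws)))\<^sup>2"
      using affine_sq_identity[of "1 / \<beta>" "1 - 1 / \<beta>" "v E \<omega> - ws" "Wb t \<omega> - ws"] by simp
    then show ?thesis by (simp add: c3_def)
  qed
  have LHS: "(\<integral>\<omega>. (norm (Wb (Suc t) \<omega> - ws))\<^sup>2 \<partial>M) = (1 / \<beta>) * ak E + (1 - 1 / \<beta>) * X2 + c3 * (\<integral>\<omega>. (norm (v E \<omega> - Wb t \<omega>))\<^sup>2 \<partial>M)"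
    unfolding ptw ak_def X2_def using i_vE i_W i_VW by simp
  have V_bd: "(\<integral>\<omega>. (norm (v E \<omega> - Wb t \<omega>))\<^sup>2 \<partial>M) \<le> \<eta>\<^sup>2 * real E * (real E * G\<^sup>2)"
  proof -
    have "(\<integral>\<omega>. (norm (v E \<omega> - Wb t \<omega>))\<^sup>2 \<partial>M) \<le> (\<integral>\<omega>. \<eta>\<^sup>2 * real E * Qs t E \<omega> \<partial>M)"
      using i_VW Qs_int by (intro integral_mono vE_bd) auto
    also have "\<dots> = \<eta>\<^sup>2 * real E * (\<integral>\<omega>. Qs t E \<omega> \<partial>M)" by simp
    also have "\<dots> \<le> \<eta>\<^sup>2 * real E * (real E * G\<^sup>2)" by (intro mult_left_mono Qs_bd) auto
    finally show ?thesis .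
  qed
  have akE: "ak E \<le> q ^ E * X2 + real E * e'" by (rule rec) simp
  have main1: "(\<integral>\<omega>. (norm (Wb (Suc t) \<omega> - ws))\<^sup>2 \<partial>M) \<le>
      (1 - 1 / \<beta> + 1 / \<beta> * q ^ E) * X2 + ((1 / \<beta>) * (real E * e') + c3 * (\<eta>\<^sup>2 * real E * (real E * G\<^sup>2)))"
  proof -
    have "(1 / \<beta>) * ak E \<le> (1 / \<beta>) * (q ^ E * X2 + real E * e')" using akE \<beta> by (intro mult_left_mono) auto
    moreover have "c3 * (\<integral>\<omega>. (norm (v E \<omega> - Wb t \<omega>))\<^sup>2 \<partial>M) \<le> c3 * (\<eta>\<^sup>2 * real E * (real E * G\<^sup>2))"
      using V_bd c3_nn by (rule mult_left_mono)
    ultimately show ?thesis unfolding LHS by (simp add: algebra_simps)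
  qed
  define K where "K = (\<gamma> t)\<^sup>2 * G\<^sup>2"
  have K_nn: "K \<ge> 0" by (simp add: K_def)
  define E3 where "E3 = real E ^ 3"
  have E1: "real E \<ge> 1" using E by simp
  have ee: "1 \<le> real E * real E" using E1 mult_mono[of 1 "real E" 1 "real E"] by simp
  have E3a: "real E \<le> E3"
  proof -
    have "real E * 1 \<le> real E * (real E * real E)" using ee E1 by (intro mult_left_mono) auto
    then show ?thesis by (simp add: E3_def power3_eq_cube)
  qed
  have E3b: "real E * real E \<le> E3"
  proof -
    have "real E * real E * 1 \<le> real E * real E * real E" using E1 by (intro mult_left_mono) auto
    then show ?thesis by (simp add: E3_def power3_eq_cube)
  qed
  have E3c: "real E * real E * real E = E3" unfolding E3_def by (simp add: power3_eq_cube)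
  have \<beta>2: "\<beta>\<^sup>2 \<le> 1" using \<beta> by (simp add: power_le_one)
  define cond where "cond = (if t \<ge> 1 then 8 * (\<gamma> (t - 1))\<^sup>2 * (1 - \<beta>)\<^sup>2 / ((\<gamma> t)\<^sup>2 * \<beta>\<^sup>2) else 0)"
  have extra1: "(1 / \<beta>) * (real E * e') \<le> real E * B + real E * \<beta> * K"
  proof -
    have "(1 / \<beta>) * (real E * e') = real E * ((2 * (\<gamma> t * L)) * B) + real E * \<beta> * K"
      using \<beta> by (simp add: e'_def \<eta>_def K_def field_simps power2_eq_square)
    also have "real E * ((2 * (\<gamma> t * L)) * B) \<le> real E * (1 * B)"
      using \<gamma>L B_nn by (intro mult_left_mono mult_right_mono) auto
    finally show ?thesis by simp
  qed
  have extra2: "c3 * (\<eta>\<^sup>2 * real E * (real E * G\<^sup>2)) = (1 - \<beta>) * K * (real E * real E)"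
    using \<beta> by (simp add: c3_eq \<eta>_def K_def field_simps power2_eq_square)
  have EB: "real E * B = 2 * \<beta>\<^sup>2 * K * E3 + 2 * (1 - \<beta>)\<^sup>2 * cI * (\<gamma> (t - 1))\<^sup>2 * G\<^sup>2 * E3"
    unfolding B_def K_def E3c[symmetric] by (simp add: algebra_simps)
  have b1: "2 * \<beta>\<^sup>2 * K * E3 \<le> 2 * K * E3" using \<beta>2 K_nn E3a E1 by (intro mult_right_mono mult_left_mono) auto
  have b2: "real E * \<beta> * K \<le> K * E3"
  proof -
    have "real E * \<beta> \<le> E3 * 1" using E3a \<beta> by (intro mult_mono) auto
    then show ?thesis using K_nn by (metis mult.commute mult.right_neutral mult_left_mono)
  qed
  have b3: "(1 - \<beta>) * K * (real E * real E) \<le> K * E3"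
  proof -
    have "(1 - \<beta>) * (real E * real E) \<le> 1 * E3" using E3b \<beta> by (intro mult_mono) auto
    then show ?thesis using K_nn by (metis mult.commute mult.left_commute mult.right_neutral mult_left_mono)
  qed
  have b4: "2 * (1 - \<beta>)\<^sup>2 * cI * (\<gamma> (t - 1))\<^sup>2 * G\<^sup>2 * E3 \<le> 8 * (\<gamma> t)\<^sup>2 * real E ^ 3 * G\<^sup>2 * cond"
  proof (cases "t \<ge> 1")
    case False then show ?thesis by (simp add: cI_def cond_def)
  next
    case True
    have "8 * (\<gamma> t)\<^sup>2 * real E ^ 3 * G\<^sup>2 * cond = 64 * ((1 - \<beta>)\<^sup>2 * (\<gamma> (t - 1))\<^sup>2 * G\<^sup>2 * E3) / \<beta>\<^sup>2"
      using True \<gamma>t \<beta> by (simp add: cond_def E3_def field_simps)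
    moreover have "2 * ((1 - \<beta>)\<^sup>2 * (\<gamma> (t - 1))\<^sup>2 * G\<^sup>2 * E3) \<le> 64 * ((1 - \<beta>)\<^sup>2 * (\<gamma> (t - 1))\<^sup>2 * G\<^sup>2 * E3) / \<beta>\<^sup>2"
    proof -
      have nn: "(1 - \<beta>)\<^sup>2 * (\<gamma> (t - 1))\<^sup>2 * G\<^sup>2 * E3 \<ge> 0" unfolding E3_def by simp
      have "2 \<le> 64 / \<beta>\<^sup>2" using \<beta>2 \<beta> by (simp add: field_simps)
      from mult_right_mono[OF this nn] show ?thesis by simp
    qed
    ultimately show ?thesis using True by (simp add: cI_def algebra_simps)
  qed
  define S where "S = (\<Sum>i\<in>UNIV. (pw p i)\<^sup>2)"
  define \<Gamma> where "\<Gamma> = Fb ws - (\<Sum>i\<in>UNIV. pw p i * F i (wi i))"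
  have \<Gamma>_nn: "\<Gamma> \<ge> 0"
  proof -
    have "(\<Sum>i\<in>UNIV. pw p i * F i (wi i)) \<le> (\<Sum>i\<in>UNIV. pw p i * F i ws)"
      by (intro sum_mono mult_left_mono wi_min pw_nn)
    then show ?thesis by (simp add: \<Gamma>_def Fb_def)
  qed
  have S_nn: "S \<ge> 0" unfolding S_def by (intro sum_nonneg) simp
  have cond_nn: "cond \<ge> 0" unfolding cond_def by simp
  define A where "A = 8 * (\<gamma> t)\<^sup>2 * real E ^ 3 * G\<^sup>2 * (4 + (1 - \<beta>)\<^sup>2 + cond)
                 + \<mu> * (\<gamma> t) ^ 3 * \<beta> * (1 - \<beta>) * real E ^ 3 * G\<^sup>2
                 + (\<gamma> t)\<^sup>2 * real E * S * \<sigma>\<^sup>2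
                 + 6 * (\<gamma> t)\<^sup>2 * L * real E * \<Gamma>"
  have A_ge: "A \<ge> 32 * K * E3 + 8 * (\<gamma> t)\<^sup>2 * real E ^ 3 * G\<^sup>2 * cond"
  proof -
    have n1: "8 * (\<gamma> t)\<^sup>2 * real E ^ 3 * G\<^sup>2 * (1 - \<beta>)\<^sup>2 \<ge> 0" by simp
    have n2: "\<mu> * (\<gamma> t) ^ 3 * \<beta> * (1 - \<beta>) * real E ^ 3 * G\<^sup>2 \<ge> 0"
      using \<mu>_pos \<gamma>t \<beta> by (intro mult_nonneg_nonneg) auto
    have n3: "(\<gamma> t)\<^sup>2 * real E * S * \<sigma>\<^sup>2 \<ge> 0" using S_nn by simp
    have n4: "6 * (\<gamma> t)\<^sup>2 * L * real E * \<Gamma> \<ge> 0" using Lnn \<Gamma>_nn by simp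
    have "A = 32 * K * E3 + 8 * (\<gamma> t)\<^sup>2 * real E ^ 3 * G\<^sup>2 * cond + 8 * (\<gamma> t)\<^sup>2 * real E ^ 3 * G\<^sup>2 * (1 - \<beta>)\<^sup>2
        + \<mu> * (\<gamma> t) ^ 3 * \<beta> * (1 - \<beta>) * real E ^ 3 * G\<^sup>2 + (\<gamma> t)\<^sup>2 * real E * S * \<sigma>\<^sup>2 + 6 * (\<gamma> t)\<^sup>2 * L * real E * \<Gamma>"
      by (simp add: A_def K_def E3_def algebra_simps)
    then show ?thesis using n1 n2 n3 n4 by linarith
  qed
  have extra: "(1 / \<beta>) * (real E * e') + c3 * (\<eta>\<^sup>2 * real E * (real E * G\<^sup>2)) \<le> A"
  proof -
    define T where "T = 2 * (1 - \<beta>)\<^sup>2 * cI * (\<gamma> (t - 1))\<^sup>2 * G\<^sup>2 * E3"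
    have KE: "K * E3 \<ge> 0" using K_nn E3a E1 by simp
    have "(1 / \<beta>) * (real E * e') + c3 * (\<eta>\<^sup>2 * real E * (real E * G\<^sup>2))
        \<le> real E * B + real E * \<beta> * K + (1 - \<beta>) * K * (real E * real E)"
      using extra1 extra2 by linarith
    also have "\<dots> = 2 * \<beta>\<^sup>2 * K * E3 + T + real E * \<beta> * K + (1 - \<beta>) * K * (real E * real E)"
      using EB by (simp add: T_def)
    also have "\<dots> \<le> 2 * K * E3 + T + K * E3 + K * E3" using b1 b2 b3 by linarith
    also have "\<dots> \<le> 32 * K * E3 + T" using KE by linarith
    also have "\<dots> \<le> 32 * K * E3 + 8 * (\<gamma> t)\<^sup>2 * real E ^ 3 * G\<^sup>2 * cond" using b4 by (simp add: T_def)
    also have "\<dots> \<le> A" by (rule A_ge)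
    finally show ?thesis .
  qed
  have \<kappa>_eq: "1 - 1 / \<beta> + 1 / \<beta> * q ^ E = 1 - 1 / \<beta> + 1 / \<beta> * (1 - \<beta> * \<mu> * \<gamma> t) ^ E" by (simp add: q_eq)
  have fin1: "(\<integral>\<omega>. (norm (wbar p \<beta> E \<gamma> sg w0 (Suc t) \<omega> - ws))\<^sup>2 \<partial>M)
      \<le> (1 - 1 / \<beta> + 1 / \<beta> * (1 - \<beta> * \<mu> * \<gamma> t) ^ E) * (\<integral>\<omega>. (norm (wbar p \<beta> E \<gamma> sg w0 t \<omega> - ws))\<^sup>2 \<partial>M) + A"
    using main1 extra unfolding \<kappa>_eq[symmetric] X2_def Wb_def by linarith
  have fin2: "1 - 1 / \<beta> + 1 / \<beta> * (1 - \<beta> * \<mu> * \<gamma> t) ^ E \<le> 1 - \<mu> * \<gamma> t"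
  proof -
    have "q ^ E \<le> q ^ 1" using q_nn q_le E by (intro power_decreasing) auto
    then have "1 / \<beta> * q ^ E \<le> 1 / \<beta> * q" using \<beta> by (intro mult_left_mono) auto
    moreover have "1 - 1 / \<beta> + 1 / \<beta> * q = 1 - \<mu> * \<gamma> t" using \<beta> by (simp add: q_eq field_simps)
    ultimately show ?thesis unfolding \<kappa>_eq[symmetric] by linarith
  qed
  show ?thesis unfolding Let_def using fin1 fin2 by (simp add: A_def S_def \<Gamma>_def cond_def)
qed

end
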